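(* Let $R\in(0,\infty)$, $k\geq1$ an integer, $p>1$, and $N=kp$. Then there exists a constant $C=C(k,p,R)>0$ such that for all $v\in W^{k,p}((0,R),\sinh^{N-1}(t))$ and all $t\in(0,R]$, \[ |v(t)|\leq\left(\log\frac{\tanh(\frac R2)}{\tanh(\frac t2)}\right)^{\frac{p-1}{p}}\frac{\|v^{(k)}\|_{L^p_{\sinh^{N-1}}}}{(k-1)!}+C\|v\|_{W^{k,p}_{\sinh^{N-1}}}. \] Moreover, if $k=1$ and $v(R)=0$, the inequality holds with $C=0$.
   Context: $W^{k,p}((0,R),\sinh^{N-1}(t))$ is the space of functions $v\colon(0,R)\to\mathbb R$ with weak derivatives up to order $k$ such that $\|v\|_{W^{k,p}_{\sinh^{N-1}}}=\left(\sum_{j=0}^k\int_0^R|v^{(j)}(t)|^p\sinh^{N-1}(t)\mathrm dt\right)^{1/p}<\infty$; $\|w\|_{L^p_{\sinh^{N-1}}}=\left(\int_0^R|w|^p\sinh^{N-1}(t)\mathrm dt\right)^{1/p}$. Elements of this space have representatives continuous on $(0,R]$, and $v(t)$ refers to that representative. *)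

theory Defs
  imports "HOL-Analysis.Analysis"
begin

definition test_fun :: "real \<Rightarrow> (real \<Rightarrow> real) \<Rightarrow> bool" where
  "test_fun R \<phi> \<longleftrightarrow>
     (\<forall>n x. ((deriv ^^ n) \<phi>) differentiable (at x)) \<and>
     (\<exists>a b. 0 < a \<and> a \<le> b \<and> b < R \<and> (\<forall>x. x \<notin> {a..b} \<longrightarrow> \<phi> x = 0))"

definition weak_deriv_on :: "real \<Rightarrow> (real \<Rightarrow> real) \<Rightarrow> (real \<Rightarrow> real) \<Rightarrow> bool" where
  "weak_deriv_on R f g \<longleftrightarrow>
     (\<forall>a b. 0 < a \<longrightarrow> b < R \<longrightarrow>
        set_integrable lborel {a..b} f \<and> set_integrable lborel {a..b} g) \<and>
     (\<forall>\<phi>. test_fun R \<phi> \<longrightarrow>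
        (LBINT t:{0<..<R}. f t * deriv \<phi> t) = - (LBINT t:{0<..<R}. g t * \<phi> t))"

definition wint :: "real \<Rightarrow> real \<Rightarrow> real \<Rightarrow> (real \<Rightarrow> real) \<Rightarrow> real" where
  "wint N p R w = (LBINT t:{0<..<R}. \<bar>w t\<bar> powr p * sinh t powr (N - 1))"

definition Lp_sinh_norm :: "real \<Rightarrow> real \<Rightarrow> real \<Rightarrow> (real \<Rightarrow> real) \<Rightarrow> real" where
  "Lp_sinh_norm N p R w = wint N p R w powr (1 / p)"

text \<open>vs 0 = v and vs j is its j-th weak derivative, for j \<le> k; membership in
  W^{k,p}((0,R), sinh^(N-1)).\<close>
definition in_Wkp_sinh :: "nat \<Rightarrow> real \<Rightarrow> real \<Rightarrow> real \<Rightarrow> (nat \<Rightarrow> real \<Rightarrow> real) \<Rightarrow> bool" where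
  "in_Wkp_sinh k p N R vs \<longleftrightarrow>
     (\<forall>j<k. weak_deriv_on R (vs j) (vs (Suc j))) \<and>
     (\<forall>j\<le>k. set_integrable lborel {0<..<R} (\<lambda>t. \<bar>vs j t\<bar> powr p * sinh t powr (N - 1)))"

definition Wkp_sinh_norm :: "nat \<Rightarrow> real \<Rightarrow> real \<Rightarrow> real \<Rightarrow> (nat \<Rightarrow> real \<Rightarrow> real) \<Rightarrow> real" where
  "Wkp_sinh_norm k p N R vs = (\<Sum>j\<le>k. wint N p R (vs j)) powr (1 / p)"

end

theory Submission
  imports Defs "HOL-Computational_Algebra.Polynomial"
begin

definition smooth_seq :: "(nat \<Rightarrow> real \<Rightarrow> real) \<Rightarrow> bool" where
  "smooth_seq F \<longleftrightarrow> (\<forall>n x. (F n has_real_derivative F (Suc n) x) (at x))"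

lemma smooth_seqD: "smooth_seq F \<Longrightarrow> (F n has_real_derivative F (Suc n) x) (at x)"
  unfolding smooth_seq_def by blast

lemma smooth_seq_deriv_funpow:
  assumes "smooth_seq F" shows "(deriv ^^ n) (F 0) = F n"
proof (induction n)
  case (Suc n)
  have "deriv (F n) = F (Suc n)"
    using smooth_seqD[OF assms] DERIV_imp_deriv by (intro ext) blast
  then show ?case using Suc by simp
qed simp

lemma smooth_seq_differentiable:
  assumes "smooth_seq F" shows "((deriv ^^ n) (F 0)) differentiable (at x)"
  using smooth_seqD[OF assms] smooth_seq_deriv_funpow[OF assms]
  by (metis real_differentiable_def)

lemma smooth_seq_cont: "smooth_seq F \<Longrightarrow> continuous_on A (F n)"
  by (meson DERIV_isCont continuous_at_imp_continuous_on smooth_seqD)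

lemma smooth_seq_isCont: "smooth_seq F \<Longrightarrow> isCont (F n) x"
  by (meson DERIV_isCont smooth_seqD)

lemma smooth_seq_shift: "smooth_seq F \<Longrightarrow> smooth_seq (\<lambda>n. F (n + m))"
  unfolding smooth_seq_def by simp

lemma smooth_seq_const: "smooth_seq (\<lambda>n x. if n = 0 then c else 0)"
  unfolding smooth_seq_def by (auto intro!: derivative_eq_intros)

lemma smooth_seq_add:
  "smooth_seq F \<Longrightarrow> smooth_seq G \<Longrightarrow> smooth_seq (\<lambda>n x. F n x + G n x)"
  unfolding smooth_seq_def by (auto intro!: derivative_eq_intros)

lemma smooth_seq_scale:
  "smooth_seq F \<Longrightarrow> smooth_seq (\<lambda>n x. c * F n x)"
  unfolding smooth_seq_def by (auto intro!: derivative_eq_intros)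

lemma smooth_seq_affine:
  assumes "smooth_seq F"
  shows "smooth_seq (\<lambda>n x. a ^ n * F n (a * x + c))"
  unfolding smooth_seq_def
proof (intro allI)
  fix n x
  have d: "((\<lambda>x. F n (a * x + c)) has_real_derivative F (Suc n) (a * x + c) * a) (at x)"
    by (rule DERIV_chain2[OF smooth_seqD[OF assms]]) (auto intro!: derivative_eq_intros)
  then show "((\<lambda>x. a ^ n * F n (a * x + c)) has_real_derivative a ^ Suc n * F (Suc n) (a * x + c)) (at x)"
    using DERIV_cmult[OF d, of "a^n"] by (simp add: algebra_simps)
qed

lemma smooth_seq_mult:
  assumes F: "smooth_seq F" and G: "smooth_seq G"
  shows "smooth_seq (\<lambda>n x. \<Sum>i\<le>n. real (n choose i) * F i x * G (n - i) x)"
  unfolding smooth_seq_def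
proof (intro allI)
  fix n x
  have d: "((\<lambda>x. \<Sum>i\<le>n. real (n choose i) * F i x * G (n - i) x) has_real_derivative
     (\<Sum>i\<le>n. real (n choose i) * (F (Suc i) x * G (n - i) x + F i x * G (Suc (n - i)) x))) (at x)"
    unfolding mult.assoc
    by (intro DERIV_sum DERIV_cmult) (auto intro!: derivative_eq_intros smooth_seqD[OF F] smooth_seqD[OF G])
  have "(\<Sum>i\<le>n. real (n choose i) * (F (Suc i) x * G (n - i) x + F i x * G (Suc (n - i)) x))
      = (\<Sum>i\<le>Suc n. real (Suc n choose i) * F i x * G (Suc n - i) x)"
  proof -
    have A: "(\<Sum>i\<le>n. real (n choose i) * (F (Suc i) x * G (n - i) x))
        = (\<Sum>i\<le>Suc n. real (n choose (i - 1)) * (if i = 0 then 0 else F i x * G (Suc n - i) x))"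
      by (subst sum.atMost_Suc_shift) (simp add: sum.atMost_Suc_shift)
    have B: "(\<Sum>i\<le>n. real (n choose i) * (F i x * G (Suc (n - i)) x))
        = (\<Sum>i\<le>Suc n. real (n choose i) * (F i x * G (Suc n - i) x))"
      by (simp add: Suc_diff_le)
    have "(\<Sum>i\<le>n. real (n choose i) * (F (Suc i) x * G (n - i) x + F i x * G (Suc (n - i)) x))
       = (\<Sum>i\<le>Suc n. real (n choose (i - 1)) * (if i = 0 then 0 else F i x * G (Suc n - i) x))
         + (\<Sum>i\<le>Suc n. real (n choose i) * (F i x * G (Suc n - i) x))"
      by (simp add: distrib_left sum.distrib A B)
    also have "\<dots> = (\<Sum>i\<le>Suc n. real (Suc n choose i) * F i x * G (Suc n - i) x)"
      unfolding sum.distrib[symmetric]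
    proof (intro sum.cong refl)
      fix i assume "i \<in> {..Suc n}"
      show "real (n choose (i - 1)) * (if i = 0 then 0 else F i x * G (Suc n - i) x) +
         real (n choose i) * (F i x * G (Suc n - i) x) = real (Suc n choose i) * F i x * G (Suc n - i) x"
        by (cases i) (auto simp: algebra_simps)
    qed
    finally show ?thesis .
  qed
  then show "((\<lambda>x. \<Sum>i\<le>n. real (n choose i) * F i x * G (n - i) x) has_real_derivative
     (\<Sum>i\<le>Suc n. real (Suc n choose i) * F i x * G (Suc n - i) x)) (at x)"
    using d by simp
qed

definition pw :: "nat \<Rightarrow> real \<Rightarrow> nat \<Rightarrow> real \<Rightarrow> real" where
  "pw m t j x = (if j \<le> m then (x - t) ^ (m - j) / fact (m - j) else 0)"

lemma smooth_seq_pw: "smooth_seq (pw m t)"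
  unfolding smooth_seq_def
proof (intro allI)
  fix j x
  show "(pw m t j has_real_derivative pw m t (Suc j) x) (at x)"
  proof (cases "j < m")
    case True
    then obtain r where r: "m - j = Suc r" "m - Suc j = r"
      by (metis Suc_diff_Suc)
    have "((\<lambda>x. (x - t) ^ Suc r / fact (Suc r)) has_real_derivative
        (real (Suc r) * (x - t) ^ r * 1) / fact (Suc r)) (at x)"
      by (intro derivative_eq_intros) auto
    moreover have "(real (Suc r) * (x - t) ^ r * 1) / fact (Suc r) = (x - t) ^ r / fact r"
      by (simp add: divide_simps fact_Suc) 
    ultimately show ?thesis using True r unfolding pw_def by (simp add: not_less_eq_eq [symmetric])
  next
    case False
    then show ?thesis unfolding pw_def
      by (cases "j = m") (auto intro!: derivative_eq_intros)
  qed
qed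

lemma pw_at: "pw m t j t = (if j = m then 1 else 0)"
  unfolding pw_def by auto

lemma poly_exp_tendsto: "((\<lambda>z. poly q z * exp (- z)) \<longlongrightarrow> (0::real)) at_top"
proof -
  have "((\<lambda>z. \<Sum>i\<le>degree q. coeff q i * (z ^ i / exp z)) \<longlongrightarrow> (\<Sum>i\<le>degree q. coeff q i * 0)) at_top"
    by (intro tendsto_sum tendsto_mult tendsto_const tendsto_power_div_exp_0)
  moreover have "(\<lambda>z. \<Sum>i\<le>degree q. coeff q i * (z ^ i / exp z)) = (\<lambda>z. poly q z * exp (- z))"
    by (intro ext) (simp add: poly_altdef sum_distrib_right exp_minus divide_inverse mult.assoc)
  ultimately show ?thesis by simp
qed

fun Pn :: "nat \<Rightarrow> real poly" where
  "Pn 0 = 1"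
| "Pn (Suc n) = [:0,0,1:] * (Pn n - pderiv (Pn n))"

definition Es :: "nat \<Rightarrow> real \<Rightarrow> real" where
  "Es n x = (if 0 < x then poly (Pn n) (inverse x) * exp (- inverse x) else 0)"

lemma Es_deriv_pos:
  assumes "0 < x"
  shows "((\<lambda>x. poly (Pn n) (inverse x) * exp (- inverse x)) has_real_derivative
      poly (Pn (Suc n)) (inverse x) * exp (- inverse x)) (at x)"
proof -
  have "((\<lambda>x. poly (Pn n) (inverse x) * exp (- inverse x)) has_real_derivative
      poly (pderiv (Pn n)) (inverse x) * (- inverse (x ^ 2)) * exp (- inverse x)
      + poly (Pn n) (inverse x) * (exp (- inverse x) * (inverse (x ^ 2)))) (at x)"
    using assms
    by (auto intro!: derivative_eq_intros DERIV_chain2[OF poly_DERIV] simp: power2_eq_square)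
  moreover have "poly (pderiv (Pn n)) (inverse x) * (- inverse (x ^ 2)) * exp (- inverse x)
      + poly (Pn n) (inverse x) * (exp (- inverse x) * (inverse (x ^ 2)))
      = poly (Pn (Suc n)) (inverse x) * exp (- inverse x)"
    by (simp add: algebra_simps power2_eq_square)
  ultimately show ?thesis by simp
qed

lemma Es_deriv:
  "(Es n has_real_derivative Es (Suc n) x) (at x)"
proof (cases "0 < x")
  case True
  have e: "Es (Suc n) x = poly (Pn (Suc n)) (inverse x) * exp (- inverse x)"
    using True by (simp add: Es_def)
  show ?thesis unfolding e
    by (rule has_field_derivative_transform_within_open[OF Es_deriv_pos[OF True, of n], where S="{0<..}"])
       (use True in \<open>auto simp: Es_def\<close>)
next
  case False
  note nx = False
  show ?thesis
  proof (cases "x < 0")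
    case True
    have e: "Es (Suc n) x = 0" using True by (simp add: Es_def)
    have "((\<lambda>_. 0) has_real_derivative 0) (at x)" by simp
    then show ?thesis unfolding e
      by (rule has_field_derivative_transform_within_open[where S="{..<0}"])
         (use True in \<open>auto simp: Es_def\<close>)
  next
    case False
    then have x0: "x = 0" using nx by simp
    have "((\<lambda>y. (Es n y - Es n 0) / (y - 0)) \<longlongrightarrow> 0) (at 0)"
    proof (rule filterlim_split_at)
      show "((\<lambda>y. (Es n y - Es n 0) / (y - 0)) \<longlongrightarrow> 0) (at_left 0)"
        by (rule tendsto_eventually) (auto simp: eventually_at_left_field Es_def intro: exI[of _ "-1"])
      have lim: "((\<lambda>y. poly ([:0,1:] * Pn n) (inverse y) * exp (- inverse y)) \<longlongrightarrow> 0) (at_right 0)"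
        by (rule filterlim_compose[OF poly_exp_tendsto filterlim_inverse_at_top_right])
      show "((\<lambda>y. (Es n y - Es n 0) / (y - 0)) \<longlongrightarrow> 0) (at_right 0)"
        apply (rule Lim_transform_eventually[OF lim])
        by (auto simp: eventually_at_right_field Es_def divide_inverse intro!: exI[of _ 1])
    qed
    then have "(Es n has_real_derivative 0) (at 0)"
      by (simp add: has_field_derivative_iff)
    then show ?thesis using x0 by (simp add: Es_def)
  qed
qed

lemma smooth_Es: "smooth_seq Es"
  unfolding smooth_seq_def using Es_deriv by blast

lemma Es0: "Es 0 x = (if 0 < x then exp (- inverse x) else 0)"
  by (simp add: Es_def)

definition Bs :: "nat \<Rightarrow> real \<Rightarrow> real" where
  "Bs n x = (\<Sum>i\<le>n. real (n choose i) * Es i x * ((-1) ^ (n - i) * Es (n - i) ((-1) * x + 1)))"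

lemma smooth_Bs: "smooth_seq Bs"
  unfolding Bs_def by (intro smooth_seq_mult smooth_Es smooth_seq_affine)

lemma Bs0: "Bs 0 x = Es 0 x * Es 0 (1 - x)"
  by (simp add: Bs_def)

lemma Bs0_pos: "0 < x \<Longrightarrow> x < 1 \<Longrightarrow> 0 < Bs 0 x"
  by (simp add: Bs0 Es0)

lemma Bs0_nonneg: "0 \<le> Bs 0 x"
  by (simp add: Bs0 Es0)

lemma smooth_seq_zero_open:
  assumes F: "smooth_seq F" and S: "open S" and z: "\<And>x. x \<in> S \<Longrightarrow> F 0 x = 0"
  shows "x \<in> S \<Longrightarrow> F n x = 0"
proof (induction n arbitrary: x)
  case 0 then show ?case using z by simp
next
  case (Suc n)
  have "((\<lambda>_. 0) has_real_derivative 0) (at x)" by simp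
  then have "(F n has_real_derivative 0) (at x)"
    by (rule has_field_derivative_transform_within_open[OF _ S Suc.prems]) (use Suc.IH in auto)
  then show ?case using smooth_seqD[OF F, of n x] DERIV_unique by metis
qed

lemma Bs_out: "x < 0 \<or> 1 < x \<Longrightarrow> Bs n x = 0"
proof -
  assume x: "x < 0 \<or> 1 < x"
  have "open ({..<0} \<union> {1<..} :: real set)" by auto
  moreover have "Bs 0 y = 0" if "y \<in> {..<0} \<union> {1<..}" for y
    using that by (auto simp: Bs0 Es0)
  ultimately show ?thesis using smooth_seq_zero_open[OF smooth_Bs, of "{..<0} \<union> {1<..}" x n] x
    by auto
qed

definition Ib :: "real \<Rightarrow> real" where
  "Ib x = integral {-1..x} (Bs 0)"

lemma Ib_deriv: "(Ib has_real_derivative Bs 0 x) (at x)"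
proof (cases "x < -1/2")
  case True
  have z: "Ib y = 0" if "y < -1/2" for y
  proof -
    have "integral {-1..y} (Bs 0) = integral {-1..y} (\<lambda>_. 0)"
      by (intro integral_cong) (use that Bs_out in auto)
    then show ?thesis by (simp add: Ib_def)
  qed
  have "((\<lambda>_. 0) has_real_derivative 0) (at x)" by simp
  then have "(Ib has_real_derivative 0) (at x)"
    by (rule has_field_derivative_transform_within_open[where S="{..<-1/2}"]) (use True z in auto)
  then show ?thesis using Bs_out True by simp
next
  case False
  have c: "continuous_on {-1..x+1} (Bs 0)" by (rule smooth_seq_cont[OF smooth_Bs])
  have "((\<lambda>u. integral {-1..u} (Bs 0)) has_real_derivative Bs 0 x) (at x within {-1..x+1})"
    by (rule integral_has_real_derivative[OF c]) (use False in auto)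
  then have "((\<lambda>u. integral {-1..u} (Bs 0)) has_real_derivative Bs 0 x) (at x)"
    using False by (subst (asm) at_within_interior) (auto simp: interior_atLeastAtMost_real)
  then show ?thesis by (simp add: Ib_def[abs_def])
qed

lemma Ib_zero: "x \<le> 0 \<Longrightarrow> Ib x = 0"
proof -
  assume x: "x \<le> 0"
  have "integral {-1..x} (Bs 0) = integral {-1..x} (\<lambda>_. 0)"
    by (intro integral_cong) (use x Bs_out Bs0 Es0 in auto)
  then show ?thesis by (simp add: Ib_def)
qed

lemma Ib_one: "1 \<le> x \<Longrightarrow> Ib x = Ib 1"
proof -
  assume x: "1 \<le> x"
  show ?thesis
  proof (cases "x = 1")
    case False
    then have "1 < x" using x by simp
    moreover have "continuous_on {1..x} Ib"
      using Ib_deriv by (meson DERIV_isCont continuous_at_imp_continuous_on)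
    ultimately show ?thesis
      using DERIV_isconst_end[of 1 x Ib] Ib_deriv Bs_out by (metis less_trans)
  qed simp
qed

lemma Ib_one_pos: "0 < Ib 1"
proof -
  have "Ib 0 < Ib 1"
    apply (rule DERIV_pos_imp_increasing_open[of 0 1])
    using Ib_deriv Bs0_pos by (auto intro!: continuous_at_imp_continuous_on DERIV_isCont)
  then show ?thesis using Ib_zero by simp
qed

definition Hs :: "nat \<Rightarrow> real \<Rightarrow> real" where
  "Hs n x = (if n = 0 then Ib x / Ib 1 else Bs (n - 1) x / Ib 1)"

lemma smooth_Hs: "smooth_seq Hs"
  unfolding smooth_seq_def
proof (intro allI)
  fix n x
  show "(Hs n has_real_derivative Hs (Suc n) x) (at x)"
  proof (cases n)
    case 0
    then show ?thesis unfolding Hs_def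
      using DERIV_cdivide[OF Ib_deriv, of "Ib 1"] by (simp add: divide_inverse)
  next
    case (Suc m)
    then show ?thesis unfolding Hs_def
      using DERIV_cdivide[OF smooth_seqD[OF smooth_Bs, of m x], of "Ib 1"] by (simp add: divide_inverse)
  qed
qed

lemma Hs0_zero: "x \<le> 0 \<Longrightarrow> Hs 0 x = 0"
  by (simp add: Hs_def Ib_zero)

lemma Hs0_one: "1 \<le> x \<Longrightarrow> Hs 0 x = 1"
proof -
  assume "1 \<le> x"
  then have "Ib x = Ib 1" by (rule Ib_one)
  then show ?thesis using Ib_one_pos by (simp add: Hs_def)
qed

lemma Hs_out: "0 < n \<Longrightarrow> x < 0 \<or> 1 < x \<Longrightarrow> Hs n x = 0"
  by (simp add: Hs_def Bs_out)

lemma bounded_cont_out: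
  fixes f :: "real \<Rightarrow> real"
  assumes "continuous_on UNIV f" "\<And>x. x \<notin> {a..b} \<Longrightarrow> \<bar>f x\<bar> \<le> M"
  shows "\<exists>K. \<forall>x. \<bar>f x\<bar> \<le> K"
proof -
  have "compact (f ` {a..b})"
    by (rule compact_continuous_image) (use assms(1) continuous_on_subset in auto)
  then obtain K where K: "\<And>y. y \<in> f ` {a..b} \<Longrightarrow> norm y \<le> K"
    using compact_imp_bounded bounded_iff by metis
  show ?thesis
    apply (rule exI[of _ "max K M"])
    using K assms(2) by (metis image_eqI max.coboundedI1 max.coboundedI2 real_norm_def)
qed

lemma Hs_bounded: "\<exists>K. \<forall>x. \<bar>Hs n x\<bar> \<le> K"
  apply (rule bounded_cont_out[where a=0 and b=1 and M=1])
   apply (rule smooth_seq_cont[OF smooth_Hs])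
  apply (cases "n = 0")
  using Hs0_zero Hs0_one Hs_out by (auto simp: not_le)

lemma abs_powr_integrable_imp:
  fixes f :: "real \<Rightarrow> real"
  assumes p: "p > 0" and mf: "f \<in> borel_measurable borel"
  shows "(\<lambda>x. \<bar>f x\<bar> powr p) \<in> borel_measurable borel"
  using mf by measurable

lemma holder_young_bound:
  fixes x y p q :: real
  assumes "p > 1" "q > 1" "1/p + 1/q = 1"
  shows "\<bar>x * y\<bar> \<le> \<bar>x\<bar> powr p / p + \<bar>y\<bar> powr q / q"
  using Youngs_inequality[OF assms, of "\<bar>x\<bar>" "\<bar>y\<bar>"] by (simp add: abs_mult)

lemma holder_integrable:
  fixes f g :: "real \<Rightarrow> real"
  assumes pq: "p > 1" "q > 1" "1/p + 1/q = 1"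
    and mf: "f \<in> borel_measurable borel" and mg: "g \<in> borel_measurable borel"
    and If: "integrable lborel (\<lambda>x. \<bar>f x\<bar> powr p)" and Ig: "integrable lborel (\<lambda>x. \<bar>g x\<bar> powr q)"
  shows "integrable lborel (\<lambda>x. f x * g x)"
proof (rule Bochner_Integration.integrable_bound)
  show "integrable lborel (\<lambda>x. \<bar>f x\<bar> powr p / p + \<bar>g x\<bar> powr q / q)"
    using If Ig by auto
  show "(\<lambda>x. f x * g x) \<in> borel_measurable lborel" using mf mg by simp
  show "AE x in lborel. norm (f x * g x) \<le> norm (\<bar>f x\<bar> powr p / p + \<bar>g x\<bar> powr q / q)"
    using holder_young_bound[OF pq] pq by (auto intro!: AE_I2 order_trans[OF _ abs_ge_self])
qed

lemma integral_zero_powr_imp: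
  fixes f g :: "real \<Rightarrow> real"
  assumes p: "p > 0" and If: "integrable lborel (\<lambda>x. \<bar>f x\<bar> powr p)"
    and P0: "integral\<^sup>L lborel (\<lambda>x. \<bar>f x\<bar> powr p) = 0"
  shows "integral\<^sup>L lborel (\<lambda>x. \<bar>f x * g x\<bar>) = 0"
proof -
  have "AE x in lborel. \<bar>f x\<bar> powr p = 0"
    using integral_nonneg_eq_0_iff_AE[OF If] P0 by auto
  then have "AE x in lborel. \<bar>f x * g x\<bar> = 0"
    by eventually_elim auto
  then show ?thesis by (rule integral_eq_zero_AE)
qed

lemma holder:
  fixes f g :: "real \<Rightarrow> real"
  assumes pq: "p > 1" "q > 1" "1/p + 1/q = 1"
    and mf: "f \<in> borel_measurable borel" and mg: "g \<in> borel_measurable borel"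
    and If: "integrable lborel (\<lambda>x. \<bar>f x\<bar> powr p)" and Ig: "integrable lborel (\<lambda>x. \<bar>g x\<bar> powr q)"
  shows "integral\<^sup>L lborel (\<lambda>x. \<bar>f x * g x\<bar>)
     \<le> integral\<^sup>L lborel (\<lambda>x. \<bar>f x\<bar> powr p) powr (1/p) * integral\<^sup>L lborel (\<lambda>x. \<bar>g x\<bar> powr q) powr (1/q)"
proof -
  define P where "P = integral\<^sup>L lborel (\<lambda>x. \<bar>f x\<bar> powr p)"
  define Q where "Q = integral\<^sup>L lborel (\<lambda>x. \<bar>g x\<bar> powr q)"
  have P0: "P \<ge> 0" unfolding P_def by (intro integral_nonneg_AE) auto
  have Q0: "Q \<ge> 0" unfolding Q_def by (intro integral_nonneg_AE) auto
  have Ifg: "integrable lborel (\<lambda>x. \<bar>f x * g x\<bar>)"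
    using holder_integrable[OF pq mf mg If Ig] by auto
  show ?thesis
  proof (cases "P = 0 \<or> Q = 0")
    case True
    then have "integral\<^sup>L lborel (\<lambda>x. \<bar>f x * g x\<bar>) = 0"
    proof
      assume "P = 0" then show ?thesis
        using integral_zero_powr_imp[of p f g] If pq unfolding P_def by auto
    next
      assume "Q = 0" then show ?thesis
        using integral_zero_powr_imp[of q g f] Ig pq unfolding Q_def by (auto simp: mult.commute)
    qed
    then show ?thesis using P0 Q0 by (simp add: P_def[symmetric] Q_def[symmetric])
  next
    case False
    then have Pp: "P > 0" and Qp: "Q > 0" using P0 Q0 by auto
    define a where "a x = \<bar>f x\<bar> / P powr (1/p)" for x
    define b where "b x = \<bar>g x\<bar> / Q powr (1/q)" for x
    have ap: "a x powr p = \<bar>f x\<bar> powr p / P" for x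
      unfolding a_def using Pp pq by (simp add: powr_divide powr_powr)
    have bq: "b x powr q = \<bar>g x\<bar> powr q / Q" for x
      unfolding b_def using Qp pq by (simp add: powr_divide powr_powr)
    have ab: "a x * b x \<le> \<bar>f x\<bar> powr p / P / p + \<bar>g x\<bar> powr q / Q / q" for x
      using Youngs_inequality[OF pq, of "a x" "b x"] Pp Qp ap[of x] bq[of x]
      by (simp add: a_def b_def)
    have eq: "(\<lambda>x. \<bar>f x * g x\<bar>) = (\<lambda>x. (P powr (1/p) * Q powr (1/q)) * (a x * b x))"
      using Pp Qp by (auto simp: a_def b_def abs_mult)
    have "integral\<^sup>L lborel (\<lambda>x. a x * b x) \<le> integral\<^sup>L lborel (\<lambda>x. \<bar>f x\<bar> powr p / P / p + \<bar>g x\<bar> powr q / Q / q)"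
      apply (rule integral_mono)
      using Ifg Pp Qp If Ig ab by (auto simp: eq)
    also have "\<dots> = P / P / p + Q / Q / q"
      using If Ig by (simp add: P_def Q_def)
    also have "\<dots> = 1" using Pp Qp pq by simp
    finally have "integral\<^sup>L lborel (\<lambda>x. a x * b x) \<le> 1" .
    then have "(P powr (1/p) * Q powr (1/q)) * integral\<^sup>L lborel (\<lambda>x. a x * b x) \<le> P powr (1/p) * Q powr (1/q)"
      using Pp Qp by (simp add: mult_left_le)
    then show ?thesis unfolding eq P_def[symmetric] Q_def[symmetric] by simp
  qed
qed

lemma test_fun_smooth:
  assumes F: "smooth_seq F" and ab: "0 < a" "a \<le> b" "b < R"
    and supp: "\<And>x. x \<notin> {a..b} \<Longrightarrow> F 0 x = 0"
  shows "test_fun R (F j)" and "\<And>x. x \<notin> {a..b} \<Longrightarrow> F j x = 0"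
proof -
  have z: "F j x = 0" if "x \<notin> {a..b}" for j x
    using smooth_seq_zero_open[OF F, of "- {a..b}" x j] supp that by auto
  then show "\<And>x. x \<notin> {a..b} \<Longrightarrow> F j x = 0" .
  have "smooth_seq (\<lambda>n. F (n + j))" by (rule smooth_seq_shift[OF F])
  from smooth_seq_differentiable[OF this] have "\<forall>n x. ((deriv ^^ n) (F j)) differentiable (at x)"
    by simp
  then show "test_fun R (F j)" unfolding test_fun_def using ab z by blast
qed

lemma deriv_smooth_seq: "smooth_seq F \<Longrightarrow> deriv (F j) = F (Suc j)"
  using smooth_seqD DERIV_imp_deriv by (intro ext) blast

lemma iterated_weak:
  assumes chain: "\<forall>j<k. weak_deriv_on R (vs j) (vs (Suc j))"
  shows "j \<le> k \<Longrightarrow> smooth_seq F \<Longrightarrow> 0 < a \<Longrightarrow> a \<le> b \<Longrightarrow> b < R \<Longrightarrow>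
    (\<And>x. x \<notin> {a..b} \<Longrightarrow> F 0 x = 0) \<Longrightarrow>
    (LBINT t:{0<..<R}. vs 0 t * F j t) = (-1) ^ j * (LBINT t:{0<..<R}. vs j t * F 0 t)"
proof (induction j arbitrary: F)
  case 0 then show ?case by simp
next
  case (Suc j)
  let ?F = "\<lambda>n. F (n + 1)"
  have sF: "smooth_seq ?F" by (rule smooth_seq_shift[OF Suc.prems(2)])
  have z1: "?F 0 x = 0" if "x \<notin> {a..b}" for x
    using test_fun_smooth(2)[OF Suc.prems(2-5), of x 1] Suc.prems(6) that by auto
  have "(LBINT t:{0<..<R}. vs 0 t * F (Suc j) t) = (LBINT t:{0<..<R}. vs 0 t * ?F j t)" by simp
  also have "\<dots> = (-1) ^ j * (LBINT t:{0<..<R}. vs j t * ?F 0 t)"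
    using Suc.IH[OF _ sF Suc.prems(3-5) z1] Suc.prems(1) by simp
  also have "(LBINT t:{0<..<R}. vs j t * ?F 0 t) = (LBINT t:{0<..<R}. vs j t * deriv (F 0) t)"
    using deriv_smooth_seq[OF Suc.prems(2), of 0] by simp
  also have "\<dots> = - (LBINT t:{0<..<R}. vs (Suc j) t * F 0 t)"
    using chain Suc.prems(1) test_fun_smooth(1)[OF Suc.prems(2-6), of 0]
    unfolding weak_deriv_on_def by auto
  finally show ?case by simp
qed

lemma set_integral_restrict_support:
  fixes f :: "real \<Rightarrow> real"
  assumes "J \<subseteq> A" "\<And>s. s \<notin> J \<Longrightarrow> f s = 0"
  shows "(LBINT s:A. f s) = (LBINT s:J. f s)"
  unfolding set_lebesgue_integral_def
  by (rule Bochner_Integration.integral_cong) (use assms in \<open>auto simp: indicator_def\<close>)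

lemma cont_bound_interval:
  fixes f :: "real \<Rightarrow> real"
  assumes "continuous_on {a..b} f"
  shows "\<exists>K. \<forall>x\<in>{a..b}. \<bar>f x\<bar> \<le> K"
proof -
  have "compact (f ` {a..b})" by (rule compact_continuous_image[OF assms]) simp
  then obtain K where "\<And>y. y \<in> f ` {a..b} \<Longrightarrow> norm y \<le> K"
    using compact_imp_bounded bounded_iff by metis
  then show ?thesis by auto
qed

lemma set_integrable_mult_bounded:
  fixes f g :: "real \<Rightarrow> real"
  assumes f: "set_integrable lborel A f" and g: "g \<in> borel_measurable borel"
    and K: "\<And>x. x \<in> A \<Longrightarrow> \<bar>g x\<bar> \<le> K"
  shows "set_integrable lborel A (\<lambda>x. f x * g x)"
proof (rule set_integrable_bound[where f="\<lambda>x. K * f x"])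
  show "set_integrable lborel A (\<lambda>x. K * f x)" using f by auto
  have "(\<lambda>x. indicator A x *\<^sub>R f x) \<in> borel_measurable lborel"
    using f unfolding set_integrable_def by (rule borel_measurable_integrable)
  then have "(\<lambda>x. (indicator A x *\<^sub>R f x) * g x) \<in> borel_measurable lborel"
    using g by measurable
  then show "set_borel_measurable lborel A (\<lambda>x. f x * g x)"
    unfolding set_borel_measurable_def by (simp add: mult.assoc)
  show "AE x in lborel. x \<in> A \<longrightarrow> norm (f x * g x) \<le> norm (K * f x)"
  proof (rule AE_I2, intro impI)
    fix x assume "x \<in> A"
    then have "\<bar>g x\<bar> \<le> K" by (rule K)
    then have "\<bar>f x * g x\<bar> \<le> \<bar>K * f x\<bar>"
      by (simp add: abs_mult mult.commute mult_left_mono abs_ge_zero)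
         (metis abs_ge_zero mult.commute mult_right_mono)
    then show "norm (f x * g x) \<le> norm (K * f x)" by simp
  qed
qed

lemma taylor_vanish:
  assumes G: "smooth_seq G" and z: "\<And>j. j < m \<Longrightarrow> G j t = 0"
    and Gb: "\<And>s. \<bar>s - t\<bar> \<le> 1 \<Longrightarrow> \<bar>G m s\<bar> \<le> B"
  shows "r \<le> m \<Longrightarrow> \<bar>s - t\<bar> \<le> 1 \<Longrightarrow> \<bar>G (m - r) s\<bar> \<le> B * \<bar>s - t\<bar> ^ r"
proof (induction r arbitrary: s)
  case 0 then show ?case using Gb by simp
next
  case (Suc r)
  define j where "j = m - Suc r"
  have jm: "Suc j = m - r" "j < m" using Suc.prems unfolding j_def by auto
  have IH: "\<bar>G (Suc j) u\<bar> \<le> B * \<bar>u - t\<bar> ^ r" if "\<bar>u - t\<bar> \<le> 1" for u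
    using Suc.IH[of u] Suc.prems that jm by simp
  have Gjt: "G j t = 0" using z jm by simp
  have main: "\<bar>G j s\<bar> \<le> B * \<bar>s - t\<bar> ^ Suc r"
  proof (cases "s = t")
    case True then show ?thesis using Gjt by simp
  next
    case False
    obtain z where zb: "min s t < z" "z < max s t"
      and eq: "G j (max s t) - G j (min s t) = (max s t - min s t) * G (Suc j) z"
      using MVT2[of "min s t" "max s t" "G j" "G (Suc j)"] smooth_seqD[OF G] False
      by (metis linorder_neqE_linordered_idom max.absorb1 max.absorb2 min.absorb1 min.absorb2 order_less_imp_le)
    have zt: "\<bar>z - t\<bar> \<le> \<bar>s - t\<bar>" using zb by (auto simp: min_def max_def split: if_splits)
    have "\<bar>G j s\<bar> = \<bar>s - t\<bar> * \<bar>G (Suc j) z\<bar>"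
    proof (cases "s \<le> t")
      case True
      then have "- G j s = (t - s) * G (Suc j) z" using eq Gjt by (simp add: min_def max_def)
      then have "\<bar>G j s\<bar> = \<bar>(t - s) * G (Suc j) z\<bar>" by (metis abs_minus_cancel)
      then show ?thesis using True by (simp add: abs_mult)
    next
      case False
      then have "G j s = (s - t) * G (Suc j) z" using eq Gjt by (simp add: min_def max_def)
      then show ?thesis using False by (simp add: abs_mult)
    qed
    also have "\<dots> \<le> \<bar>s - t\<bar> * (B * \<bar>z - t\<bar> ^ r)"
      using IH[of z] zt Suc.prems by (intro mult_left_mono) auto
    also have "\<dots> \<le> \<bar>s - t\<bar> * (B * \<bar>s - t\<bar> ^ r)"
    proof -
      have B0: "B \<ge> 0" using Gb[of t] by auto
      show ?thesis
        by (intro mult_left_mono power_mono zt) (use B0 in auto)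
    qed
    finally show ?thesis by (simp add: algebra_simps)
  qed
  then show ?case using jm by (simp add: j_def)
qed

definition hc :: "real \<Rightarrow> real \<Rightarrow> real \<Rightarrow> real \<Rightarrow> real" where
  "hc \<sigma> t \<epsilon> s = Hs 0 ((\<sigma>/\<epsilon>) * s + - (\<sigma>/\<epsilon>) * t)"

definition cutf :: "real \<Rightarrow> real \<Rightarrow> real \<Rightarrow> real" where
  "cutf \<sigma> t s = (if 0 < \<sigma> * (s - t) then 1 else 0)"

definition Phi :: "real \<Rightarrow> real \<Rightarrow> real \<Rightarrow> (nat \<Rightarrow> real \<Rightarrow> real) \<Rightarrow> nat \<Rightarrow> real \<Rightarrow> real" where
  "Phi \<sigma> t \<epsilon> G j s = (\<Sum>i\<le>j. real (j choose i) * ((\<sigma>/\<epsilon>) ^ i * Hs i ((\<sigma>/\<epsilon>) * s + - (\<sigma>/\<epsilon>) * t)) * G (j - i) s)"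

definition Dd :: "real \<Rightarrow> real \<Rightarrow> real \<Rightarrow> (nat \<Rightarrow> real \<Rightarrow> real) \<Rightarrow> nat \<Rightarrow> real \<Rightarrow> real" where
  "Dd \<sigma> t \<epsilon> G k s = (\<Sum>i\<in>{1..k}. real (k choose i) * ((\<sigma>/\<epsilon>) ^ i * Hs i ((\<sigma>/\<epsilon>) * s + - (\<sigma>/\<epsilon>) * t)) * G (k - i) s)"

lemma Phi_smooth: "smooth_seq G \<Longrightarrow> smooth_seq (Phi \<sigma> t \<epsilon> G)"
  unfolding Phi_def[abs_def] by (rule smooth_seq_mult[OF smooth_seq_affine[OF smooth_Hs]])

lemma hc_smooth: "smooth_seq (\<lambda>n x. (\<sigma>/\<epsilon>) ^ n * Hs n ((\<sigma>/\<epsilon>) * x + - (\<sigma>/\<epsilon>) * t))"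
  by (rule smooth_seq_affine[OF smooth_Hs])

lemma hc_cont: "continuous_on A (hc \<sigma> t \<epsilon>)"
  using smooth_seq_cont[OF hc_smooth[of \<sigma> \<epsilon> t], of A 0] unfolding hc_def[abs_def] by simp

lemma Phi_0: "Phi \<sigma> t \<epsilon> G 0 s = hc \<sigma> t \<epsilon> s * G 0 s"
  by (simp add: Phi_def hc_def)

lemma Phi_k: "Phi \<sigma> t \<epsilon> G k s = hc \<sigma> t \<epsilon> s * G k s + Dd \<sigma> t \<epsilon> G k s"
  by (simp add: Phi_def Dd_def hc_def atMost_atLeast0 sum.atLeast_Suc_atMost)

lemma affine_arg: "(\<epsilon>::real) > 0 \<Longrightarrow> (\<sigma>/\<epsilon>) * s + - (\<sigma>/\<epsilon>) * t = \<sigma> * (s - t) / \<epsilon>"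
  by (simp add: diff_divide_distrib right_diff_distrib)

lemma Hs_neg: "x < 0 \<Longrightarrow> Hs i x = 0"
  by (cases "i = 0") (auto simp: Hs0_zero Hs_out)

lemma Phi_zero_out:
  assumes e: "\<epsilon> > 0"
    and Gfar: "\<And>j s. 0 \<le> \<sigma> * (s - t) \<Longrightarrow> s \<le> \<alpha> \<or> \<beta> \<le> s \<Longrightarrow> G j s = 0"
    and s: "s \<notin> {\<alpha><..<\<beta>}"
  shows "Phi \<sigma> t \<epsilon> G j s = 0"
proof (cases "\<sigma> * (s - t) < 0")
  case True
  then have "\<sigma> * (s - t) / \<epsilon> < 0" using e by (simp add: divide_neg_pos)
  then show ?thesis unfolding Phi_def affine_arg[OF e] by (simp add: Hs_neg)
next
  case False
  then show ?thesis unfolding Phi_def using Gfar s by auto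
qed

lemma Dd_zero:
  assumes e: "\<epsilon> > 0" and s: "\<bar>s - t\<bar> > \<epsilon>" and \<sigma>: "\<sigma> = 1 \<or> \<sigma> = -1"
  shows "Dd \<sigma> t \<epsilon> G k s = 0"
proof -
  have "\<sigma> * (s - t) / \<epsilon> < 0 \<or> 1 < \<sigma> * (s - t) / \<epsilon>"
    using \<sigma> s e by (auto simp: field_simps abs_if split: if_splits)
  then have "Hs i (\<sigma> * (s - t) / \<epsilon>) = 0" if "1 \<le> i" for i
    using Hs_out that by auto
  then show ?thesis unfolding Dd_def affine_arg[OF e] by simp
qed

lemma hc_lim:
  assumes \<sigma>: "\<sigma> = 1 \<or> \<sigma> = -1"
  shows "(\<lambda>n. hc \<sigma> t (1 / real (Suc n)) s) \<longlonglongrightarrow> cutf \<sigma> t s"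
proof (cases "0 < \<sigma> * (s - t)")
  case True
  obtain N :: nat where N: "1 / (\<sigma> * (s - t)) < real N" using reals_Archimedean2 by blast
  have "eventually (\<lambda>n. hc \<sigma> t (1 / real (Suc n)) s = cutf \<sigma> t s) sequentially"
    unfolding eventually_sequentially
  proof (intro exI allI impI)
    fix n assume "N \<le> n"
    then have "1 / (\<sigma> * (s - t)) < real (Suc n)" using N by linarith
    then have "1 \<le> \<sigma> * (s - t) * real (Suc n)" using True by (simp add: field_simps)
    then show "hc \<sigma> t (1 / real (Suc n)) s = cutf \<sigma> t s"
      unfolding hc_def using True
      by (subst affine_arg) (auto simp: cutf_def Hs0_one)
  qed
  then show ?thesis by (rule tendsto_eventually)
next
  case False
  have "hc \<sigma> t (1 / real (Suc n)) s = cutf \<sigma> t s" for n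
  proof -
    have "\<sigma> * (s - t) / (1 / real (Suc n)) \<le> 0" using False
      by (simp add: mult_nonpos_nonneg)
    then show ?thesis unfolding hc_def using False
      by (subst affine_arg) (auto simp: cutf_def Hs0_zero)
  qed
  then show ?thesis by simp
qed

lemma cutf_measurable: "cutf \<sigma> t \<in> borel_measurable borel"
  unfolding cutf_def[abs_def] by measurable

lemma hc_measurable: "hc \<sigma> t \<epsilon> \<in> borel_measurable borel"
  by (rule borel_measurable_continuous_onI[OF hc_cont])

lemma Dd_term_bound:
  fixes \<epsilon> \<sigma> :: real
  assumes e: "0 < \<epsilon>" and \<sigma>: "\<sigma> = 1 \<or> \<sigma> = -1" and st: "\<bar>s - t\<bar> \<le> \<epsilon>"
    and K: "\<bar>h\<bar> \<le> Ki" and Tg: "\<bar>g\<bar> \<le> B * \<bar>s - t\<bar> ^ j" and B0: "0 \<le> B"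
  shows "\<bar>c * ((\<sigma>/\<epsilon>) ^ Suc j * h) * g\<bar> \<le> \<bar>c\<bar> * Ki * B / \<epsilon>"
proof -
  have s1: "\<bar>\<sigma>/\<epsilon>\<bar> = 1/\<epsilon>" using \<sigma> e by auto
  have pa: "\<bar>(\<sigma>/\<epsilon>) ^ Suc j\<bar> = (1/\<epsilon>) ^ Suc j" by (simp only: power_abs s1)
  have "\<bar>c * ((\<sigma>/\<epsilon>) ^ Suc j * h) * g\<bar> = \<bar>c\<bar> * (\<bar>(\<sigma>/\<epsilon>) ^ Suc j\<bar> * (\<bar>h\<bar> * \<bar>g\<bar>))"
    by (simp only: abs_mult mult.assoc)
  also have "\<dots> = \<bar>c\<bar> * ((1/\<epsilon>) ^ Suc j * (\<bar>h\<bar> * \<bar>g\<bar>))" by (simp only: pa)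
  also have "\<dots> \<le> \<bar>c\<bar> * ((1/\<epsilon>) ^ Suc j * (Ki * (B * \<epsilon> ^ j)))"
  proof -
    have "\<bar>s - t\<bar> ^ j \<le> \<epsilon> ^ j" by (rule power_mono[OF st]) simp
    then have "\<bar>g\<bar> \<le> B * \<epsilon> ^ j" using Tg B0 by (meson mult_left_mono order_trans)
    then have "\<bar>h\<bar> * \<bar>g\<bar> \<le> Ki * (B * \<epsilon> ^ j)"
      using K by (intro mult_mono) auto
    then show ?thesis using e by (intro mult_left_mono) auto
  qed
  also have "(1/\<epsilon>) ^ Suc j * (Ki * (B * \<epsilon> ^ j)) = Ki * B / \<epsilon> * ((1/\<epsilon>) ^ j * \<epsilon> ^ j)"
    by (simp add: field_simps)
  also have "(1/\<epsilon>) ^ j * \<epsilon> ^ j = 1" using e by (simp add: power_mult_distrib[symmetric])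
  finally show ?thesis by simp
qed

lemma Dd_bound:
  fixes \<epsilon> \<sigma> :: real
  assumes e: "0 < \<epsilon>" and \<sigma>: "\<sigma> = 1 \<or> \<sigma> = -1" and st: "\<bar>s - t\<bar> \<le> \<epsilon>"
    and K: "\<And>i x. \<bar>Hs i x\<bar> \<le> Kf i"
    and T: "\<And>i. 1 \<le> i \<Longrightarrow> i \<le> k \<Longrightarrow> \<bar>G (k - i) s\<bar> \<le> B * \<bar>s - t\<bar> ^ (i - 1)"
    and B0: "0 \<le> B"
  shows "\<bar>Dd \<sigma> t \<epsilon> G k s\<bar> \<le> (\<Sum>i\<in>{1..k}. real (k choose i) * Kf i * B) / \<epsilon>"
proof -
  have "\<bar>Dd \<sigma> t \<epsilon> G k s\<bar> \<le> (\<Sum>i\<in>{1..k}. \<bar>real (k choose i) * ((\<sigma>/\<epsilon>) ^ i * Hs i ((\<sigma>/\<epsilon>) * s + - (\<sigma>/\<epsilon>) * t)) * G (k - i) s\<bar>)"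
    unfolding Dd_def by (rule sum_abs)
  also have "\<dots> \<le> (\<Sum>i\<in>{1..k}. real (k choose i) * Kf i * B / \<epsilon>)"
  proof (rule sum_mono)
    fix i assume i: "i \<in> {1..k}"
    then obtain j where j: "i = Suc j" by (cases i) auto
    show "\<bar>real (k choose i) * ((\<sigma>/\<epsilon>) ^ i * Hs i ((\<sigma>/\<epsilon>) * s + - (\<sigma>/\<epsilon>) * t)) * G (k - i) s\<bar>
        \<le> real (k choose i) * Kf i * B / \<epsilon>"
      using Dd_term_bound[OF e \<sigma> st K[of i] T[of i] B0, of "real (k choose i)"] i j by simp
  qed
  also have "\<dots> = (\<Sum>i\<in>{1..k}. real (k choose i) * Kf i * B) / \<epsilon>"
    by (simp add: sum_divide_distrib)
  finally show ?thesis .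
qed

lemma dc_cut:
  fixes f :: "real \<Rightarrow> real"
  assumes f: "set_integrable lborel J f" and \<sigma>: "\<sigma> = 1 \<or> \<sigma> = -1"
  shows "(\<lambda>n. LBINT s:J. f s * hc \<sigma> t (1 / real (Suc n)) s) \<longlonglongrightarrow> (LBINT s:J. f s * cutf \<sigma> t s)"
proof -
  obtain K where K: "\<And>x. \<bar>Hs 0 x\<bar> \<le> K" using Hs_bounded by blast
  have mf: "(\<lambda>x. indicator J x *\<^sub>R f x) \<in> borel_measurable lborel"
    using f unfolding set_integrable_def by (rule borel_measurable_integrable)
  have hm: "\<And>n. hc \<sigma> t (1 / real (Suc n)) \<in> borel_measurable lborel"
    using hc_measurable by simp
  have cm: "cutf \<sigma> t \<in> borel_measurable lborel" using cutf_measurable by simp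
  show ?thesis
    unfolding set_lebesgue_integral_def
  proof (rule integral_dominated_convergence[where w="\<lambda>x. K * norm (indicator J x *\<^sub>R f x)"])
    show "(\<lambda>x. indicator J x *\<^sub>R (f x * cutf \<sigma> t x)) \<in> borel_measurable lborel"
      using borel_measurable_times[OF mf cm] by (simp add: mult.assoc)
    show "(\<lambda>x. indicator J x *\<^sub>R (f x * hc \<sigma> t (1 / real (Suc n)) x)) \<in> borel_measurable lborel" for n
      using borel_measurable_times[OF mf hm[of n]] by (simp add: mult.assoc)
    show "integrable lborel (\<lambda>x. K * norm (indicator J x *\<^sub>R f x))"
      using f unfolding set_integrable_def by auto
    show "AE x in lborel. (\<lambda>n. indicator J x *\<^sub>R (f x * hc \<sigma> t (1 / real (Suc n)) x)) \<longlonglongrightarrow> indicator J x *\<^sub>R (f x * cutf \<sigma> t x)"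
      by (intro AE_I2 tendsto_intros hc_lim[OF \<sigma>])
    show "AE x in lborel. norm (indicator J x *\<^sub>R (f x * hc \<sigma> t (1 / real (Suc n)) x)) \<le> K * norm (indicator J x *\<^sub>R f x)" for n
    proof (rule AE_I2)
      fix x
      have "\<bar>hc \<sigma> t (1 / real (Suc n)) x\<bar> \<le> K" unfolding hc_def by (rule K)
      then show "norm (indicator J x *\<^sub>R (f x * hc \<sigma> t (1 / real (Suc n)) x)) \<le> K * norm (indicator J x *\<^sub>R f x)"
        by (auto simp: abs_mult indicator_def) (metis abs_ge_zero mult.commute mult_left_mono)
    qed
  qed
qed

lemma Dd_eq: "Dd \<sigma> t \<epsilon> G k s = Phi \<sigma> t \<epsilon> G k s - hc \<sigma> t \<epsilon> s * G k s"
  using Phi_k[of \<sigma> t \<epsilon> G k s] by simp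

lemma Dd_cont: "smooth_seq G \<Longrightarrow> continuous_on A (Dd \<sigma> t \<epsilon> G k)"
  unfolding Dd_eq[abs_def]
  by (intro continuous_intros smooth_seq_cont[OF Phi_smooth] hc_cont smooth_seq_cont)

lemma FTC_smooth:
  fixes a b :: real
  assumes F: "smooth_seq F" and ab: "a \<le> b"
  shows "integral\<^sup>L lborel (\<lambda>x. indicator {a..b} x *\<^sub>R F (Suc j) x) = F j b - F j a"
proof (rule integral_FTC_atLeastAtMost[OF ab])
  show "continuous_on {a..b} (F (Suc j))" by (rule smooth_seq_cont[OF F])
  fix x
  show "(F j has_vector_derivative F (Suc j) x) (at x within {a..b})"
    using smooth_seqD[OF F, of j x]
    by (simp add: has_real_derivative_iff_has_vector_derivative has_vector_derivative_at_within)
qed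

lemma set_int_cont:
  fixes f :: "real \<Rightarrow> real"
  shows "continuous_on UNIV f \<Longrightarrow> set_integrable lborel {a..b} f"
  by (rule borel_integrable_atLeastAtMost') (auto intro: continuous_on_subset)

lemma set_integrable_mult_cont:
  fixes f g :: "real \<Rightarrow> real"
  assumes f: "set_integrable lborel {a..b} f" and g: "continuous_on UNIV g"
  shows "set_integrable lborel {a..b} (\<lambda>x. f x * g x)"
proof -
  obtain M where M: "\<forall>x\<in>{a..b}. \<bar>g x\<bar> \<le> M"
    using cont_bound_interval[of a b g] g continuous_on_subset by blast
  show ?thesis
    by (rule set_integrable_mult_bounded[OF f borel_measurable_continuous_onI[OF g]]) (use M in auto)
qed

lemma set_integrable_mult_hc:
  fixes f :: "real \<Rightarrow> real"
  assumes f: "set_integrable lborel A f"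
  shows "set_integrable lborel A (\<lambda>x. f x * hc \<sigma> t \<epsilon> x)"
proof -
  obtain K where K: "\<And>x. \<bar>Hs 0 x\<bar> \<le> K" using Hs_bounded by blast
  show ?thesis
    by (rule set_integrable_mult_bounded[OF f hc_measurable]) (use K in \<open>auto simp: hc_def\<close>)
qed

lemma delta_extract:
  fixes vs G :: "nat \<Rightarrow> real \<Rightarrow> real" and \<sigma> t \<alpha> \<beta> R :: real
  assumes chain: "\<forall>j<k. weak_deriv_on R (vs j) (vs (Suc j))" and k1: "1 \<le> k"
    and ab: "0 < \<alpha>" "\<alpha> < t" "t < \<beta>" "\<beta> < R"
    and cont: "isCont (vs 0) t"
    and G: "smooth_seq G" and \<sigma>: "\<sigma> = 1 \<or> \<sigma> = -1"
    and Gfar: "\<And>j s. 0 \<le> \<sigma> * (s - t) \<Longrightarrow> s \<le> \<alpha> \<or> \<beta> \<le> s \<Longrightarrow> G j s = 0"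
    and Gt0: "\<And>j. j < k - 1 \<Longrightarrow> G j t = 0" and Gt1: "G (k - 1) t = 1"
  shows "vs 0 t = \<sigma> * ((-1) ^ k * (LBINT s:{\<alpha>..\<beta>}. (vs k s * G 0 s) * cutf \<sigma> t s)
                       - (LBINT s:{\<alpha>..\<beta>}. (vs 0 s * G k s) * cutf \<sigma> t s))"
proof -
  define J where "J = {\<alpha>..\<beta>}"
  define \<epsilon> where "\<epsilon> n = 1 / real (Suc n)" for n
  have epos: "0 < \<epsilon> n" "\<epsilon> n \<le> 1" for n unfolding \<epsilon>_def by auto
  have locint: "set_integrable lborel J (vs j)" if "j \<le> k" for j
  proof (cases "j < k")
    case True
    then show ?thesis using chain ab unfolding weak_deriv_on_def J_def by auto
  next
    case False
    then have "k - 1 < k" "j = Suc (k - 1)" using that k1 by auto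
    then show ?thesis using chain ab unfolding weak_deriv_on_def J_def by metis
  qed
  have Gc: "continuous_on UNIV (G j)" for j by (rule smooth_seq_cont[OF G])
  have Phi_out: "Phi \<sigma> t (\<epsilon> n) G j s = 0" if "s \<notin> J" for n j s
    by (rule Phi_zero_out[OF epos(1) Gfar]) (use that in \<open>auto simp: J_def\<close>)
  have JR: "J \<subseteq> {0<..<R}" using ab by (auto simp: J_def)
  have kk: "Suc (k - 1) = k" using k1 by simp

  have eqn0: "(LBINT s:J. vs 0 s * Phi \<sigma> t (\<epsilon> n) G k s) = (-1) ^ k * (LBINT s:J. vs k s * Phi \<sigma> t (\<epsilon> n) G 0 s)" for n
  proof -
    have "(LBINT s:{0<..<R}. vs 0 s * Phi \<sigma> t (\<epsilon> n) G k s) = (-1) ^ k * (LBINT s:{0<..<R}. vs k s * Phi \<sigma> t (\<epsilon> n) G 0 s)"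
      by (rule iterated_weak[OF chain order_refl Phi_smooth[OF G], of \<alpha> \<beta>])
         (use ab Phi_out in \<open>auto simp: J_def\<close>)
    moreover have "(LBINT s:{0<..<R}. vs 0 s * Phi \<sigma> t (\<epsilon> n) G k s) = (LBINT s:J. vs 0 s * Phi \<sigma> t (\<epsilon> n) G k s)"
      by (rule set_integral_restrict_support[OF JR]) (use Phi_out in auto)
    moreover have "(LBINT s:{0<..<R}. vs k s * Phi \<sigma> t (\<epsilon> n) G 0 s) = (LBINT s:J. vs k s * Phi \<sigma> t (\<epsilon> n) G 0 s)"
      by (rule set_integral_restrict_support[OF JR]) (use Phi_out in auto)
    ultimately show ?thesis by simp
  qed

  define A where "A n = (LBINT s:J. (vs 0 s * G k s) * hc \<sigma> t (\<epsilon> n) s)" for n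
  define B where "B n = (LBINT s:J. vs 0 s * Dd \<sigma> t (\<epsilon> n) G k s)" for n
  define C where "C n = (LBINT s:J. (vs k s * G 0 s) * hc \<sigma> t (\<epsilon> n) s)" for n
  define E where "E n = (LBINT s:J. G k s * hc \<sigma> t (\<epsilon> n) s)" for n
  define Di where "Di n = (LBINT s:J. Dd \<sigma> t (\<epsilon> n) G k s)" for n

  have i_v0Gk: "set_integrable lborel J (\<lambda>s. vs 0 s * G k s)"
    unfolding J_def by (rule set_integrable_mult_cont[OF locint[unfolded J_def] Gc]) simp
  have i_vkG0: "set_integrable lborel J (\<lambda>s. vs k s * G 0 s)"
    unfolding J_def by (rule set_integrable_mult_cont[OF locint[unfolded J_def] Gc]) simp
  have i_A: "set_integrable lborel J (\<lambda>s. (vs 0 s * G k s) * hc \<sigma> t (\<epsilon> n) s)" for n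
    by (rule set_integrable_mult_hc[OF i_v0Gk])
  have i_B: "set_integrable lborel J (\<lambda>s. vs 0 s * Dd \<sigma> t (\<epsilon> n) G k s)" for n
    unfolding J_def by (rule set_integrable_mult_cont[OF locint[unfolded J_def] Dd_cont[OF G]]) simp
  have i_E: "set_integrable lborel J (\<lambda>s. G k s * hc \<sigma> t (\<epsilon> n) s)" for n
    unfolding J_def by (rule set_int_cont) (intro continuous_intros Gc hc_cont)
  have i_Di: "set_integrable lborel J (Dd \<sigma> t (\<epsilon> n) G k)" for n
    unfolding J_def by (rule set_int_cont) (rule Dd_cont[OF G])

  have eqn: "A n + B n = (-1) ^ k * C n" for n
  proof -
    have "(LBINT s:J. vs 0 s * Phi \<sigma> t (\<epsilon> n) G k s)
        = (LBINT s:J. (vs 0 s * G k s) * hc \<sigma> t (\<epsilon> n) s + vs 0 s * Dd \<sigma> t (\<epsilon> n) G k s)"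
      by (simp add: Phi_k algebra_simps)
    also have "\<dots> = A n + B n" unfolding A_def B_def by (rule set_integral_add(2)[OF i_A i_B])
    finally have 1: "(LBINT s:J. vs 0 s * Phi \<sigma> t (\<epsilon> n) G k s) = A n + B n" .
    have 2: "(LBINT s:J. vs k s * Phi \<sigma> t (\<epsilon> n) G 0 s) = C n"
      unfolding C_def by (simp add: Phi_0 algebra_simps)
    show ?thesis using eqn0[of n] 1 2 by simp
  qed

  have DiE: "Di n = - E n" for n
  proof -
    have "integral\<^sup>L lborel (\<lambda>x. indicator J x *\<^sub>R Phi \<sigma> t (\<epsilon> n) G (Suc (k - 1)) x)
        = Phi \<sigma> t (\<epsilon> n) G (k - 1) \<beta> - Phi \<sigma> t (\<epsilon> n) G (k - 1) \<alpha>"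
      unfolding J_def by (rule FTC_smooth[OF Phi_smooth[OF G]]) (use ab in auto)
    also have "\<dots> = 0" using Phi_out[of \<beta>] Phi_out[of \<alpha>] Phi_zero_out[OF epos(1) Gfar]
      by (simp add: J_def)
    finally have "(LBINT s:J. Phi \<sigma> t (\<epsilon> n) G k s) = 0"
      unfolding set_lebesgue_integral_def kk .
    moreover have "(LBINT s:J. Phi \<sigma> t (\<epsilon> n) G k s) = E n + Di n"
    proof -
      have fe: "Phi \<sigma> t (\<epsilon> n) G k = (\<lambda>s. G k s * hc \<sigma> t (\<epsilon> n) s + Dd \<sigma> t (\<epsilon> n) G k s)"
        by (intro ext) (simp add: Phi_k mult.commute)
      show ?thesis unfolding E_def Di_def fe by (rule set_integral_add(2)[OF i_E i_Di])
    qed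
    ultimately show ?thesis by simp
  qed

  define Ainf where "Ainf = (LBINT s:J. (vs 0 s * G k s) * cutf \<sigma> t s)"
  define Cinf where "Cinf = (LBINT s:J. (vs k s * G 0 s) * cutf \<sigma> t s)"
  define Einf where "Einf = (LBINT s:J. G k s * cutf \<sigma> t s)"
  have limA: "A \<longlonglongrightarrow> Ainf" unfolding A_def Ainf_def \<epsilon>_def by (rule dc_cut[OF i_v0Gk \<sigma>])
  have limC: "C \<longlonglongrightarrow> Cinf" unfolding C_def Cinf_def \<epsilon>_def by (rule dc_cut[OF i_vkG0 \<sigma>])
  have limE: "E \<longlonglongrightarrow> Einf" unfolding E_def Einf_def \<epsilon>_def
    by (rule dc_cut[OF _ \<sigma>]) (unfold J_def, rule set_int_cont[OF Gc])

  have Gm[measurable]: "G j \<in> borel_measurable borel" for j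
    by (rule borel_measurable_continuous_onI[OF Gc])
  have cm[measurable]: "cutf \<sigma> t \<in> borel_measurable borel" by (rule cutf_measurable)
  have Einf_val: "Einf = - \<sigma>"
  proof -
    from \<sigma> consider "\<sigma> = 1" | "\<sigma> = -1" by blast
    then show ?thesis
    proof cases
      case 1
      have "Einf = integral\<^sup>L lborel (\<lambda>x. indicator {t..\<beta>} x *\<^sub>R G (Suc (k - 1)) x)"
        unfolding Einf_def set_lebesgue_integral_def kk
      proof (rule integral_cong_AE)
        show "(\<lambda>x. indicator J x *\<^sub>R (G k x * cutf \<sigma> t x)) \<in> borel_measurable lborel"
          unfolding J_def by measurable
        show "(\<lambda>x. indicator {t..\<beta>} x *\<^sub>R G k x) \<in> borel_measurable lborel"
          by measurable
        have pw: "indicator J x *\<^sub>R (G k x * cutf \<sigma> t x) = indicator {t..\<beta>} x *\<^sub>R G k x" if "x \<noteq> t" for x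
          using that ab 1 by (cases "x < t") (auto simp: indicator_def cutf_def J_def)
        show "AE x in lborel. indicator J x *\<^sub>R (G k x * cutf \<sigma> t x) = indicator {t..\<beta>} x *\<^sub>R G k x"
          using AE_lborel_singleton[of t] by (rule eventually_mono) (rule pw)
      qed
      also have "\<dots> = G (k - 1) \<beta> - G (k - 1) t" by (rule FTC_smooth[OF G]) (use ab in auto)
      also have "\<dots> = -1" using Gt1 Gfar[of \<beta> "k - 1"] 1 ab by auto
      finally show ?thesis using 1 by simp
    next
      case 2
      have "Einf = integral\<^sup>L lborel (\<lambda>x. indicator {\<alpha>..t} x *\<^sub>R G (Suc (k - 1)) x)"
        unfolding Einf_def set_lebesgue_integral_def kk
      proof (rule integral_cong_AE)
        show "(\<lambda>x. indicator J x *\<^sub>R (G k x * cutf \<sigma> t x)) \<in> borel_measurable lborel"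
          unfolding J_def by measurable
        show "(\<lambda>x. indicator {\<alpha>..t} x *\<^sub>R G k x) \<in> borel_measurable lborel"
          by measurable
        have pw: "indicator J x *\<^sub>R (G k x * cutf \<sigma> t x) = indicator {\<alpha>..t} x *\<^sub>R G k x" if "x \<noteq> t" for x
          using that ab 2 by (cases "x < t") (auto simp: indicator_def cutf_def J_def)
        show "AE x in lborel. indicator J x *\<^sub>R (G k x * cutf \<sigma> t x) = indicator {\<alpha>..t} x *\<^sub>R G k x"
          using AE_lborel_singleton[of t] by (rule eventually_mono) (rule pw)
      qed
      also have "\<dots> = G (k - 1) t - G (k - 1) \<alpha>" by (rule FTC_smooth[OF G]) (use ab in auto)
      also have "\<dots> = 1" using Gt1 Gfar[of \<alpha> "k - 1"] 2 ab by auto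
      finally show ?thesis using 2 by simp
    qed
  qed

  have limX: "(\<lambda>n. B n - vs 0 t * Di n) \<longlonglongrightarrow> 0"
  proof -
    have "\<forall>i. \<exists>K. \<forall>x. \<bar>Hs i x\<bar> \<le> K" using Hs_bounded by blast
    then obtain Kf where Kf: "\<And>i x. \<bar>Hs i x\<bar> \<le> Kf i" by metis
    obtain Bb where Bb: "\<forall>s\<in>{t-1..t+1}. \<bar>G (k - 1) s\<bar> \<le> Bb"
      using cont_bound_interval[of "t-1" "t+1" "G (k - 1)"] Gc continuous_on_subset by blast
    have Bb0: "0 \<le> Bb" using Bb[rule_format, of t] by auto
    have Bb': "\<bar>G (k - 1) s\<bar> \<le> Bb" if "\<bar>s - t\<bar> \<le> 1" for s
      using Bb that by (auto simp: abs_le_iff)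
    have Kf0: "0 \<le> Kf i" for i using Kf[of i 0] by auto
    have tay: "\<bar>G (k - i) s\<bar> \<le> Bb * \<bar>s - t\<bar> ^ (i - 1)" if "1 \<le> i" "i \<le> k" "\<bar>s - t\<bar> \<le> 1" for i s
    proof -
      have "\<bar>G (k - 1 - (i - 1)) s\<bar> \<le> Bb * \<bar>s - t\<bar> ^ (i - 1)"
        by (rule taylor_vanish[OF G, of "k - 1" t Bb]) (use Gt0 Bb' that in auto)
      moreover have "k - 1 - (i - 1) = k - i" using that by simp
      ultimately show ?thesis by simp
    qed
    define MD where "MD = (\<Sum>i\<in>{1..k}. real (k choose i) * Kf i * Bb)"
    have MD0: "0 \<le> MD" unfolding MD_def using Kf0 Bb0 by (intro sum_nonneg) auto
    have Dbound: "\<bar>Dd \<sigma> t (\<epsilon> n) G k s\<bar> \<le> MD / \<epsilon> n" if "\<bar>s - t\<bar> \<le> \<epsilon> n" for n s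
      unfolding MD_def
      by (rule Dd_bound[OF epos(1) \<sigma> that Kf _ Bb0]) (use tay that epos(2)[of n] in auto)
    have Dzero: "Dd \<sigma> t (\<epsilon> n) G k s = 0" if "\<bar>s - t\<bar> > \<epsilon> n" for n s
      by (rule Dd_zero[OF epos(1) that \<sigma>])
    have i_c: "set_integrable lborel J (\<lambda>s. vs 0 t * Dd \<sigma> t (\<epsilon> n) G k s)" for n
      using i_Di[of n] by auto
    have Xeq: "B n - vs 0 t * Di n = (LBINT s:J. (vs 0 s - vs 0 t) * Dd \<sigma> t (\<epsilon> n) G k s)" for n
    proof -
      have "(LBINT s:J. (vs 0 s - vs 0 t) * Dd \<sigma> t (\<epsilon> n) G k s)
          = (LBINT s:J. vs 0 s * Dd \<sigma> t (\<epsilon> n) G k s - vs 0 t * Dd \<sigma> t (\<epsilon> n) G k s)"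
        by (simp add: algebra_simps)
      also have "\<dots> = B n - vs 0 t * Di n"
        unfolding B_def Di_def by (subst set_integral_diff(2)[OF i_B i_c]) simp
      finally show ?thesis by simp
    qed
    have i_X: "set_integrable lborel J (\<lambda>s. (vs 0 s - vs 0 t) * Dd \<sigma> t (\<epsilon> n) G k s)" for n
    proof -
      have "set_integrable lborel J (\<lambda>s. vs 0 s * Dd \<sigma> t (\<epsilon> n) G k s - vs 0 t * Dd \<sigma> t (\<epsilon> n) G k s)"
        by (rule set_integral_diff(1)[OF i_B i_c])
      then show ?thesis by (simp add: algebra_simps)
    qed
    show ?thesis
    proof (rule LIMSEQ_I)
      fix r :: real assume r: "0 < r"
      define \<eta> where "\<eta> = r / (2 * MD + 1)"
      have eta: "0 < \<eta>" "2 * \<eta> * MD < r"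
        using r MD0 by (auto simp: \<eta>_def field_simps)
      have "vs 0 \<midarrow>t\<rightarrow> vs 0 t" using cont by (simp add: isCont_def)
      then obtain \<delta> where \<delta>: "0 < \<delta>" "\<And>x. x \<noteq> t \<Longrightarrow> norm (x - t) < \<delta> \<Longrightarrow> norm (vs 0 x - vs 0 t) < \<eta>"
        using eta(1) unfolding LIM_eq by blast
      have cl: "\<bar>vs 0 x - vs 0 t\<bar> \<le> \<eta>" if "\<bar>x - t\<bar> < \<delta>" for x
        using \<delta>(2)[of x] that eta(1) by (cases "x = t") auto
      obtain N :: nat where N: "1 / \<delta> < real N" using reals_Archimedean2 by blast
      show "\<exists>no. \<forall>n\<ge>no. norm (B n - vs 0 t * Di n - 0) < r"
      proof (intro exI allI impI)
        fix n assume nN: "N \<le> n"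
        have en: "\<epsilon> n < \<delta>"
        proof -
          have "1 / \<delta> < real (Suc n)" using N nN by linarith
          then show ?thesis using \<delta>(1) by (simp add: \<epsilon>_def field_simps)
        qed
        define c where "c = \<eta> * (MD / \<epsilon> n)"
        have c0: "0 \<le> c" unfolding c_def using eta MD0 epos[of n] by auto
        define I where "I = {t - \<epsilon> n .. t + \<epsilon> n}"
        have "\<bar>B n - vs 0 t * Di n\<bar> \<le> (LBINT s:J. \<bar>(vs 0 s - vs 0 t) * Dd \<sigma> t (\<epsilon> n) G k s\<bar>)"
          unfolding Xeq using set_integral_norm_bound[OF i_X[of n]] by simp
        also have "\<dots> = integral\<^sup>L lborel (\<lambda>s. indicator J s * \<bar>(vs 0 s - vs 0 t) * Dd \<sigma> t (\<epsilon> n) G k s\<bar>)"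
          by (simp add: set_lebesgue_integral_def)
        also have "\<dots> \<le> integral\<^sup>L lborel (\<lambda>s. c * indicator I s)"
        proof (rule integral_mono)
          show "integrable lborel (\<lambda>s. indicator J s * \<bar>(vs 0 s - vs 0 t) * Dd \<sigma> t (\<epsilon> n) G k s\<bar>)"
            using set_integrable_abs[OF i_X[of n]] by (simp add: set_integrable_def)
          show "integrable lborel (\<lambda>s. c * indicator I s)"
            unfolding I_def by (intro integrable_mult_right integrable_real_indicator) (auto simp: emeasure_lborel_Icc_eq)
          fix s
          show "indicator J s * \<bar>(vs 0 s - vs 0 t) * Dd \<sigma> t (\<epsilon> n) G k s\<bar> \<le> c * indicator I s"
          proof (cases "\<bar>s - t\<bar> \<le> \<epsilon> n")
            case True
            have "\<bar>(vs 0 s - vs 0 t) * Dd \<sigma> t (\<epsilon> n) G k s\<bar> \<le> \<eta> * (MD / \<epsilon> n)"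
              unfolding abs_mult
              by (rule mult_mono) (use cl[of s] True en Dbound[OF True] eta in auto)
            moreover have "s \<in> I" using True unfolding I_def by auto
            ultimately show ?thesis unfolding c_def by (auto simp: indicator_def)
          next
            case False
            then show ?thesis using Dzero[of n s] c0 by (auto simp: indicator_def)
          qed
        qed
        also have "\<dots> = c * (2 * \<epsilon> n)"
          using epos[of n] by (simp add: I_def measure_def)
        also have "\<dots> = 2 * \<eta> * MD" unfolding c_def using epos[of n] by (simp add: field_simps)
        finally show "norm (B n - vs 0 t * Di n - 0) < r" using eta by simp
      qed
    qed
  qed

  have l0: "(\<lambda>n. A n + (B n - vs 0 t * Di n) - vs 0 t * E n) \<longlonglongrightarrow> Ainf + 0 - vs 0 t * Einf"
    by (intro tendsto_intros limA limX limE)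
  have feq: "(\<lambda>n. A n + (B n - vs 0 t * Di n) - vs 0 t * E n) = (\<lambda>n. (-1) ^ k * C n)"
    using eqn DiE by (intro ext) (simp add: algebra_simps)
  have l1: "(\<lambda>n. (-1) ^ k * C n) \<longlonglongrightarrow> Ainf + 0 - vs 0 t * Einf" using l0 unfolding feq .
  have l2: "(\<lambda>n. (-1) ^ k * C n) \<longlonglongrightarrow> (-1) ^ k * Cinf"
    by (intro tendsto_intros limC)
  have "Ainf + 0 - vs 0 t * Einf = (-1) ^ k * Cinf" by (rule LIMSEQ_unique[OF l1 l2])
  then have "Ainf + \<sigma> * vs 0 t = (-1) ^ k * Cinf" using Einf_val by (simp add: mult.commute)
  then have "\<sigma> * vs 0 t = (-1) ^ k * Cinf - Ainf" by linarith
  then have "\<sigma> * (\<sigma> * vs 0 t) = \<sigma> * ((-1) ^ k * Cinf - Ainf)" by simp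
  moreover have "\<sigma> * \<sigma> = 1" using \<sigma> by auto
  ultimately show ?thesis unfolding Ainf_def Cinf_def J_def by (simp add: mult.assoc[symmetric])
qed

lemma Ib_mono: "x \<le> y \<Longrightarrow> Ib x \<le> Ib y"
  by (rule DERIV_nonneg_imp_nondecreasing[of x y Ib]) (use Ib_deriv Bs0_nonneg in auto)

lemma Hs0_bounds: "0 \<le> Hs 0 x" "Hs 0 x \<le> 1"
proof -
  have "Ib 0 \<le> Ib (max 0 (min 1 x))" by (rule Ib_mono) auto
  moreover have "Ib (max 0 (min 1 x)) \<le> Ib 1" by (rule Ib_mono) auto
  moreover have "Ib x = Ib (max 0 (min 1 x))"
    using Ib_zero[of x] Ib_zero[of 0] Ib_one[of x] by (auto simp: max_def min_def)
  ultimately show "0 \<le> Hs 0 x" "Hs 0 x \<le> 1"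
    using Ib_one_pos Ib_zero[of 0] by (auto simp: Hs_def)
qed

lemma sinh_ge_self: "0 \<le> (s::real) \<Longrightarrow> s \<le> sinh s"
proof -
  assume s: "0 \<le> s"
  have "(\<lambda>x. sinh x - x) 0 \<le> (\<lambda>x. sinh x - x) s"
  proof (rule DERIV_nonneg_imp_nondecreasing[OF s])
    fix x :: real
    show "\<exists>y. ((\<lambda>x. sinh x - x) has_real_derivative y) (at x) \<and> 0 \<le> y" if "0 \<le> x" "x \<le> s"
      by (rule exI[of _ "cosh x - 1"]) (auto intro!: derivative_eq_intros simp: cosh_real_ge_1)
  qed
  then show ?thesis by simp
qed

lemma deriv_ln_tanh:
  assumes "0 < (s::real)"
  shows "((\<lambda>x. ln (tanh (x / 2))) has_real_derivative 1 / sinh s) (at s)"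
proof -
  have th: "tanh (s/2) > 0" using assms by simp
  have "((\<lambda>x. ln (tanh (x / 2))) has_real_derivative (1 / tanh (s/2)) * ((1 - tanh (s/2) ^ 2) * (1/2))) (at s)"
    using th by (auto intro!: derivative_eq_intros simp: field_simps)
  moreover have "(1 / tanh (s/2)) * ((1 - tanh (s/2) ^ 2) * (1/2)) = 1 / sinh s"
  proof -
    let ?x = "s / 2"
    have c: "cosh ?x > 0" by simp
    have sx: "sinh ?x > 0" using assms by simp
    have sd: "sinh s = 2 * sinh ?x * cosh ?x" using sinh_double[of ?x] by simp
    have h2: "1 - tanh ?x ^ 2 = 1 / cosh ?x ^ 2"
    proof -
      have nz: "1 + sinh ?x ^ 2 \<noteq> 0" by (metis add_pos_nonneg less_numeral_extra(1) zero_le_power2 order_less_irrefl)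
      show ?thesis using c cosh_square_eq[of ?x] nz by (simp add: tanh_def field_simps)
    qed
    have t: "tanh ?x = sinh ?x / cosh ?x" by (simp add: tanh_def)
    show ?thesis unfolding h2 unfolding t sd using c sx
      by (simp add: field_simps power2_eq_square)
  qed
  ultimately show ?thesis by simp
qed

lemma integral_inv_sinh:
  fixes a b :: real
  assumes "0 < a" "a \<le> b"
  shows "set_integrable lborel {a..b} (\<lambda>s. 1 / sinh s)"
    and "(LBINT s:{a..b}. 1 / sinh s) = ln (tanh (b / 2)) - ln (tanh (a / 2))"
proof -
  have c: "continuous_on {a..b} (\<lambda>s::real. 1 / sinh s)"
    using assms by (intro continuous_intros) auto
  then show "set_integrable lborel {a..b} (\<lambda>s. 1 / sinh s)" by (rule borel_integrable_atLeastAtMost')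
  have "integral\<^sup>L lborel (\<lambda>x. indicator {a..b} x *\<^sub>R (1 / sinh x)) = ln (tanh (b / 2)) - ln (tanh (a / 2))"
  proof (rule integral_FTC_atLeastAtMost[OF assms(2) _ c])
    fix x assume "a \<le> x" "x \<le> b"
    then have "0 < x" using assms by simp
    then show "((\<lambda>x. ln (tanh (x / 2))) has_vector_derivative 1 / sinh x) (at x within {a..b})"
      using deriv_ln_tanh
      by (simp add: has_real_derivative_iff_has_vector_derivative has_vector_derivative_at_within)
  qed
  then show "(LBINT s:{a..b}. 1 / sinh s) = ln (tanh (b / 2)) - ln (tanh (a / 2))"
    by (simp add: set_lebesgue_integral_def)
qed

lemma wint_nonneg: "0 \<le> wint N p R w"
  unfolding wint_def set_lebesgue_integral_def
  by (intro integral_nonneg_AE) (auto simp: indicator_def)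

lemma wint_le_Wkp: "0 < p \<Longrightarrow> j \<le> k \<Longrightarrow> wint N p R (vs j) powr (1/p) \<le> Wkp_sinh_norm k p N R vs"
  unfolding Wkp_sinh_norm_def
  by (intro powr_mono2) (auto intro!: member_le_sum wint_nonneg sum_nonneg simp: divide_nonneg_nonneg)

lemma sinh_meas[measurable]: "sinh \<in> borel_measurable (borel :: real measure)"
  by (rule borel_measurable_continuous_onI) (intro continuous_intros)

lemma set_integral_mono_set:
  fixes f :: "real \<Rightarrow> real"
  assumes "A \<subseteq> B" "set_integrable lborel A f" "set_integrable lborel B f" "\<And>x. x \<in> B \<Longrightarrow> 0 \<le> f x"
  shows "(LBINT x:A. f x) \<le> (LBINT x:B. f x)"
  unfolding set_lebesgue_integral_def
  by (rule integral_mono) (use assms in \<open>auto simp: set_integrable_def indicator_def\<close>)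

lemma wholder:
  fixes f h :: "real \<Rightarrow> real" and N p R a b :: real
  assumes p: "1 < p" and ab: "0 < a" "a \<le> b" "b < R"
    and fi: "set_integrable lborel {a..b} f"
    and fw: "set_integrable lborel {0<..<R} (\<lambda>s. \<bar>f s\<bar> powr p * sinh s powr (N - 1))"
    and hc: "continuous_on {a..b} h"
  shows "(LBINT s:{a..b}. \<bar>f s * h s\<bar>) \<le> wint N p R f powr (1/p)
           * (LBINT s:{a..b}. \<bar>h s\<bar> powr (p/(p-1)) * sinh s powr (-(N-1)/(p-1))) powr ((p-1)/p)"
proof -
  define q where "q = p / (p - 1)"
  have q: "1 < q" "1/p + 1/q = 1" "1/q = (p-1)/p" using p by (auto simp: q_def field_simps)
  define F where "F s = indicator {a..b} s * (f s * sinh s powr ((N-1)/p))" for s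
  define Gg where "Gg s = indicator {a..b} s * (h s * sinh s powr (-(N-1)/p))" for s
  have sp: "0 < sinh s" if "s \<in> {a..b}" for s using that ab by auto
  have FG: "\<bar>F s * Gg s\<bar> = indicator {a..b} s * \<bar>f s * h s\<bar>" for s
  proof (cases "s \<in> {a..b}")
    case True
    have "sinh s powr ((N-1)/p) * sinh s powr (-(N-1)/p) = 1"
    proof -
      have z: "(N-1)/p + (-(N-1)/p) = 0" by (simp add: add_divide_distrib[symmetric])
      have "sinh s powr ((N-1)/p) * sinh s powr (-(N-1)/p) = sinh s powr ((N-1)/p + (-(N-1)/p))"
        by (rule powr_add[symmetric])
      then show ?thesis unfolding z using sp[OF True] by simp
    qed
    then have "F s * Gg s = f s * h s"
      using True unfolding F_def Gg_def by (simp add: algebra_simps)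
    then show ?thesis using True by simp
  qed (simp add: F_def Gg_def)
  have Fp: "\<bar>F s\<bar> powr p = indicator {a..b} s * (\<bar>f s\<bar> powr p * sinh s powr (N - 1))" for s
  proof (cases "s \<in> {a..b}")
    case True
    have "\<bar>F s\<bar> powr p = (\<bar>f s\<bar> * sinh s powr ((N-1)/p)) powr p"
      using True sp[OF True] by (simp add: F_def abs_mult)
    also have "\<dots> = \<bar>f s\<bar> powr p * sinh s powr (N - 1)"
      using sp[OF True] p by (simp add: powr_mult powr_powr)
    finally show ?thesis using True by simp
  qed (simp add: F_def)
  have Gq: "\<bar>Gg s\<bar> powr q = indicator {a..b} s * (\<bar>h s\<bar> powr (p/(p-1)) * sinh s powr (-(N-1)/(p-1)))" for s
  proof (cases "s \<in> {a..b}")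
    case True
    have "\<bar>Gg s\<bar> powr q = (\<bar>h s\<bar> * sinh s powr (-(N-1)/p)) powr q"
      using True sp[OF True] by (simp add: Gg_def abs_mult)
    also have "\<dots> = \<bar>h s\<bar> powr q * sinh s powr (-(N-1)/p * q)"
      using sp[OF True] p by (simp add: powr_mult powr_powr)
    also have "-(N-1)/p * q = -(N-1)/(p-1)" using p by (simp add: q_def field_simps)
    finally show ?thesis using True by (simp add: q_def)
  qed (use q in \<open>simp add: Gg_def\<close>)
  have mf: "(\<lambda>x. indicator {a..b} x *\<^sub>R f x) \<in> borel_measurable borel"
    using fi unfolding set_integrable_def by (simp add: borel_measurable_integrable)
  have Fm: "F \<in> borel_measurable borel"
  proof -
    have "(\<lambda>s. (indicator {a..b} s *\<^sub>R f s) * sinh s powr ((N-1)/p)) \<in> borel_measurable borel"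
      using mf by measurable
    then show ?thesis unfolding F_def[abs_def] by (simp add: mult.assoc)
  qed
  have Gm: "Gg \<in> borel_measurable borel"
  proof -
    have "(\<lambda>x. indicator {a..b} x *\<^sub>R h x) \<in> borel_measurable borel"
      by (rule borel_measurable_continuous_on_indicator[OF _ hc]) simp
    then have "(\<lambda>s. (indicator {a..b} s *\<^sub>R h s) * sinh s powr (-(N-1)/p)) \<in> borel_measurable borel"
      by measurable
    then show ?thesis unfolding Gg_def[abs_def] by (simp add: mult.assoc)
  qed
  have fw': "set_integrable lborel {a..b} (\<lambda>s. \<bar>f s\<bar> powr p * sinh s powr (N - 1))"
    by (rule set_integrable_subset[OF fw]) (use ab in auto)
  have Fi: "integrable lborel (\<lambda>s. \<bar>F s\<bar> powr p)"
    using fw' unfolding set_integrable_def Fp by simp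
  have hw: "set_integrable lborel {a..b} (\<lambda>s. \<bar>h s\<bar> powr (p/(p-1)) * sinh s powr (-(N-1)/(p-1)))"
  proof (rule borel_integrable_atLeastAtMost')
    have "continuous_on {a..b} (\<lambda>s. sinh s powr (-(N-1)/(p-1)))"
      by (intro continuous_intros) (use sp ab in auto)
    moreover have "continuous_on {a..b} (\<lambda>s. \<bar>h s\<bar> powr (p/(p-1)))"
      using p by (intro continuous_on_powr' continuous_intros hc) auto
    ultimately show "continuous_on {a..b} (\<lambda>s. \<bar>h s\<bar> powr (p/(p-1)) * sinh s powr (-(N-1)/(p-1)))"
      by (rule continuous_on_mult[rotated])
  qed
  have Gi: "integrable lborel (\<lambda>s. \<bar>Gg s\<bar> powr q)"
    using hw unfolding set_integrable_def Gq by simp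
  have H: "integral\<^sup>L lborel (\<lambda>x. \<bar>F x * Gg x\<bar>)
     \<le> integral\<^sup>L lborel (\<lambda>x. \<bar>F x\<bar> powr p) powr (1/p) * integral\<^sup>L lborel (\<lambda>x. \<bar>Gg x\<bar> powr q) powr (1/q)"
    by (rule holder[OF p q(1) q(2) Fm Gm Fi Gi])
  have e1: "integral\<^sup>L lborel (\<lambda>x. \<bar>F x * Gg x\<bar>) = (LBINT s:{a..b}. \<bar>f s * h s\<bar>)"
    unfolding FG set_lebesgue_integral_def by simp
  have e2: "integral\<^sup>L lborel (\<lambda>x. \<bar>F x\<bar> powr p) = (LBINT s:{a..b}. \<bar>f s\<bar> powr p * sinh s powr (N - 1))"
    unfolding Fp set_lebesgue_integral_def by simp
  have e3: "integral\<^sup>L lborel (\<lambda>x. \<bar>Gg x\<bar> powr q) = (LBINT s:{a..b}. \<bar>h s\<bar> powr (p/(p-1)) * sinh s powr (-(N-1)/(p-1)))"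
    unfolding Gq set_lebesgue_integral_def by simp
  have le: "(LBINT s:{a..b}. \<bar>f s\<bar> powr p * sinh s powr (N - 1)) \<le> wint N p R f"
    unfolding wint_def by (rule set_integral_mono_set[OF _ fw' fw]) (use ab in auto)
  have n1: "0 \<le> (LBINT s:{a..b}. \<bar>f s\<bar> powr p * sinh s powr (N - 1))"
    unfolding set_lebesgue_integral_def by (intro integral_nonneg_AE) (auto simp: indicator_def)
  have n2: "0 \<le> (LBINT s:{a..b}. \<bar>h s\<bar> powr (p/(p-1)) * sinh s powr (-(N-1)/(p-1))) powr ((p-1)/p)"
    by simp
  have "(LBINT s:{a..b}. \<bar>f s\<bar> powr p * sinh s powr (N - 1)) powr (1/p) \<le> wint N p R f powr (1/p)"
    by (rule powr_mono2) (use le n1 p in auto)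
  then show ?thesis using H n2 unfolding e1 e2 e3 q(3)
    by (meson mult_right_mono order_trans)
qed

lemma first_bound:
  fixes f :: "real \<Rightarrow> real" and N p R a b :: real
  assumes p: "1 < p" and k: "1 \<le> k" and N: "N = real k * p"
    and ab: "0 < a" "a \<le> b" "b < R"
    and fi: "set_integrable lborel {a..b} f"
    and fw: "set_integrable lborel {0<..<R} (\<lambda>s. \<bar>f s\<bar> powr p * sinh s powr (N - 1))"
  shows "(LBINT s:{a..b}. \<bar>f s * s ^ (k - 1)\<bar>) \<le> wint N p R f powr (1/p) * ln (tanh (R/2) / tanh (a/2)) powr ((p-1)/p)"
proof -
  have W: "(LBINT s:{a..b}. \<bar>f s * s ^ (k - 1)\<bar>) \<le> wint N p R f powr (1/p)
           * (LBINT s:{a..b}. \<bar>s ^ (k - 1)\<bar> powr (p/(p-1)) * sinh s powr (-(N-1)/(p-1))) powr ((p-1)/p)"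
    by (rule wholder[OF p ab fi fw]) (intro continuous_intros)
  have pt: "\<bar>s ^ (k - 1)\<bar> powr (p/(p-1)) * sinh s powr (-(N-1)/(p-1)) \<le> 1 / sinh s" if s: "s \<in> {a..b}" for s
  proof -
    have s0: "0 < s" using s ab by auto
    have sh: "0 < sinh s" using s0 by simp
    have e1: "\<bar>s ^ (k - 1)\<bar> powr (p/(p-1)) = s powr (real (k - 1) * (p/(p-1)))"
      using s0 by (simp add: powr_realpow[symmetric] powr_powr)
    have "s powr (real (k - 1) * (p/(p-1))) \<le> sinh s powr (real (k - 1) * (p/(p-1)))"
      by (rule powr_mono2) (use s0 sinh_ge_self[of s] p in auto)
    then have "\<bar>s ^ (k - 1)\<bar> powr (p/(p-1)) * sinh s powr (-(N-1)/(p-1))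
        \<le> sinh s powr (real (k - 1) * (p/(p-1))) * sinh s powr (-(N-1)/(p-1))"
      unfolding e1 by (rule mult_right_mono) simp
    also have "\<dots> = sinh s powr (real (k - 1) * (p/(p-1)) + (-(N-1)/(p-1)))"
      by (rule powr_add[symmetric])
    also have "real (k - 1) * (p/(p-1)) + (-(N-1)/(p-1)) = -1"
      using p k unfolding N by (simp add: of_nat_diff field_simps)
    also have "sinh s powr (-1) = 1 / sinh s" using sh by (simp add: powr_minus divide_inverse)
    finally show ?thesis .
  qed
  have ci: "set_integrable lborel {a..b} (\<lambda>s. \<bar>s ^ (k - 1)\<bar> powr (p/(p-1)) * sinh s powr (-(N-1)/(p-1)))"
  proof (rule borel_integrable_atLeastAtMost')
    have "continuous_on {a..b} (\<lambda>s. sinh s powr (-(N-1)/(p-1)))"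
      by (intro continuous_intros) (use ab in auto)
    moreover have "continuous_on {a..b} (\<lambda>s::real. \<bar>s ^ (k - 1)\<bar> powr (p/(p-1)))"
      using p by (intro continuous_on_powr' continuous_intros) auto
    ultimately show "continuous_on {a..b} (\<lambda>s. \<bar>s ^ (k - 1)\<bar> powr (p/(p-1)) * sinh s powr (-(N-1)/(p-1)))"
      by (rule continuous_on_mult[rotated])
  qed
  have I: "(LBINT s:{a..b}. \<bar>s ^ (k - 1)\<bar> powr (p/(p-1)) * sinh s powr (-(N-1)/(p-1)))
      \<le> (LBINT s:{a..b}. 1 / sinh s)"
    by (rule set_integral_mono[OF ci integral_inv_sinh(1)[OF ab(1,2)] pt])
  also have "\<dots> = ln (tanh (b / 2)) - ln (tanh (a / 2))" by (rule integral_inv_sinh(2)[OF ab(1,2)])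
  also have "\<dots> = ln (tanh (b / 2) / tanh (a / 2))" using ab by (simp add: ln_div)
  also have "\<dots> \<le> ln (tanh (R / 2) / tanh (a / 2))"
    using ab by (simp add: divide_right_mono)
  finally have I2: "(LBINT s:{a..b}. \<bar>s ^ (k - 1)\<bar> powr (p/(p-1)) * sinh s powr (-(N-1)/(p-1)))
      \<le> ln (tanh (R / 2) / tanh (a / 2))" .
  have n0: "0 \<le> (LBINT s:{a..b}. \<bar>s ^ (k - 1)\<bar> powr (p/(p-1)) * sinh s powr (-(N-1)/(p-1)))"
    unfolding set_lebesgue_integral_def by (intro integral_nonneg_AE) (auto simp: indicator_def)
  have "(LBINT s:{a..b}. \<bar>s ^ (k - 1)\<bar> powr (p/(p-1)) * sinh s powr (-(N-1)/(p-1))) powr ((p-1)/p)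
      \<le> ln (tanh (R / 2) / tanh (a / 2)) powr ((p-1)/p)"
    by (rule powr_mono2) (use p n0 I2 in auto)
  then show ?thesis using W
    by (meson mult_left_mono order_trans powr_ge_zero)
qed

definition CWf :: "real \<Rightarrow> real \<Rightarrow> real \<Rightarrow> real \<Rightarrow> real" where
  "CWf N p a b = (LBINT s:{a..b}. sinh s powr (-(N-1)/(p-1))) powr ((p-1)/p)"

lemma L1_bound:
  fixes f :: "real \<Rightarrow> real" and N p R a b :: real
  assumes p: "1 < p" and ab: "0 < a" "a \<le> b" "b < R"
    and fi: "set_integrable lborel {a..b} f"
    and fw: "set_integrable lborel {0<..<R} (\<lambda>s. \<bar>f s\<bar> powr p * sinh s powr (N - 1))"
  shows "(LBINT s:{a..b}. \<bar>f s\<bar>) \<le> wint N p R f powr (1/p) * CWf N p a b"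
  using wholder[OF p ab fi fw, of "\<lambda>_. 1"] by (simp add: CWf_def)

lemma CWf_mono:
  fixes N p a b c :: real
  assumes p: "1 < p" and ab: "0 < a" "a \<le> b" "b \<le> c"
  shows "CWf N p a b \<le> CWf N p a c"
proof -
  have ci: "set_integrable lborel {a..x} (\<lambda>s. sinh s powr (-(N-1)/(p-1)))" for x
    by (rule borel_integrable_atLeastAtMost') (intro continuous_intros, use ab in auto)
  have "(LBINT s:{a..b}. sinh s powr (-(N-1)/(p-1))) \<le> (LBINT s:{a..c}. sinh s powr (-(N-1)/(p-1)))"
    by (rule set_integral_mono_set[OF _ ci ci]) (use ab in auto)
  moreover have "0 \<le> (LBINT s:{a..b}. sinh s powr (-(N-1)/(p-1)))"
    unfolding set_lebesgue_integral_def by (intro integral_nonneg_AE) (auto simp: indicator_def)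
  ultimately show ?thesis unfolding CWf_def by (intro powr_mono2) (use p in auto)
qed

lemma CWf_nonneg: "0 \<le> CWf N p a b"
  by (simp add: CWf_def)

definition Gc :: "nat \<Rightarrow> real \<Rightarrow> real \<Rightarrow> real \<Rightarrow> nat \<Rightarrow> real \<Rightarrow> real" where
  "Gc k t a c j s = (\<Sum>i\<le>j. real (j choose i) * pw (k - 1) t i s * (a ^ (j - i) * Hs (j - i) (a * s + c)))"

lemma Gc_smooth: "smooth_seq (Gc k t a c)"
  unfolding Gc_def[abs_def] by (rule smooth_seq_mult[OF smooth_seq_pw smooth_seq_affine[OF smooth_Hs]])

lemma Gc_zero_neg: "a * s + c < 0 \<Longrightarrow> Gc k t a c j s = 0"
  by (simp add: Gc_def Hs_neg)

lemma Gc_at_t: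
  assumes "1 < a * t + c"
  shows "Gc k t a c j t = pw (k - 1) t j t"
proof -
  have h: "Hs (j - i) (a * t + c) = (if i = j then 1 else 0)" if "i \<le> j" for i
    using that assms Hs0_one[of "a * t + c"] Hs_out[of "j - i" "a * t + c"] by auto
  have "Gc k t a c j t = (\<Sum>i\<le>j. (if i = j then real (j choose i) * pw (k - 1) t i t * a ^ (j - i) else 0))"
    unfolding Gc_def by (intro sum.cong refl) (simp add: h)
  also have "\<dots> = pw (k - 1) t j t" by simp
  finally show ?thesis .
qed

lemma Gc_0: "Gc k t a c 0 s = pw (k - 1) t 0 s * Hs 0 (a * s + c)"
  by (simp add: Gc_def)

lemma pw_bound: "\<bar>pw m t i s\<bar> \<le> (1 + \<bar>s - t\<bar>) ^ m"
proof (cases "i \<le> m")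
  case True
  have "\<bar>pw m t i s\<bar> = \<bar>s - t\<bar> ^ (m - i) / fact (m - i)"
    using True by (simp add: pw_def power_abs)
  also have "\<dots> \<le> \<bar>s - t\<bar> ^ (m - i)"
  proof -
    have F: "(1::real) \<le> fact (m - i)" by (rule fact_ge_1)
    have "\<bar>s - t\<bar> ^ (m - i) / fact (m - i) \<le> \<bar>s - t\<bar> ^ (m - i) / 1"
      by (rule divide_left_mono) (use F in auto)
    then show ?thesis by simp
  qed
  also have "\<dots> \<le> (1 + \<bar>s - t\<bar>) ^ (m - i)" by (rule power_mono) auto
  also have "\<dots> \<le> (1 + \<bar>s - t\<bar>) ^ m" by (rule power_increasing) auto
  finally show ?thesis .
qed (simp add: pw_def)

lemma Gc_k_zero:
  assumes k: "1 \<le> k" and out: "a * s + c < 0 \<or> 1 < a * s + c"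
  shows "Gc k t a c k s = 0"
proof -
  have "real (k choose i) * pw (k - 1) t i s * (a ^ (k - i) * Hs (k - i) (a * s + c)) = 0" if "i \<le> k" for i
  proof (cases "i = k")
    case True then show ?thesis using k by (simp add: pw_def)
  next
    case False
    then have "Hs (k - i) (a * s + c) = 0" using that out Hs_out[of "k - i"] by auto
    then show ?thesis by simp
  qed
  then show ?thesis unfolding Gc_def by (intro sum.neutral) auto
qed

lemma Gc_k_bound:
  assumes Kf: "\<And>i x. \<bar>Hs i x\<bar> \<le> Kf i"
  shows "\<bar>Gc k t a c k s\<bar> \<le> (\<Sum>i\<le>k. real (k choose i) * ((1 + \<bar>s - t\<bar>) ^ (k - 1) * (\<bar>a\<bar> ^ (k - i) * Kf (k - i))))"
  unfolding Gc_def
proof (rule order_trans[OF sum_abs], rule sum_mono)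
  fix i assume "i \<in> {..k}"
  have "\<bar>pw (k - 1) t i s\<bar> * \<bar>a ^ (k - i) * Hs (k - i) (a * s + c)\<bar> \<le> (1 + \<bar>s - t\<bar>) ^ (k - 1) * (\<bar>a\<bar> ^ (k - i) * Kf (k - i))"
    by (intro mult_mono pw_bound) (auto simp: abs_mult power_abs intro: mult_left_mono Kf)
  then show "\<bar>real (k choose i) * pw (k - 1) t i s * (a ^ (k - i) * Hs (k - i) (a * s + c))\<bar>
      \<le> real (k choose i) * ((1 + \<bar>s - t\<bar>) ^ (k - 1) * (\<bar>a\<bar> ^ (k - i) * Kf (k - i)))"
    by (simp add: abs_mult mult.assoc mult_left_mono)
qed

definition KH :: "nat \<Rightarrow> real" where
  "KH i = (SOME K. \<forall>x. \<bar>Hs i x\<bar> \<le> K)"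

lemma KH: "\<bar>Hs i x\<bar> \<le> KH i"
proof -
  have "\<exists>K. \<forall>x. \<bar>Hs i x\<bar> \<le> K" by (rule Hs_bounded)
  then have "\<forall>x. \<bar>Hs i x\<bar> \<le> KH i" unfolding KH_def by (rule someI_ex)
  then show ?thesis by blast
qed

lemma KH_nonneg: "0 \<le> KH i"
  using KH[of i 0] by linarith

lemma int_bound_helper:
  fixes F g :: "real \<Rightarrow> real"
  assumes F: "set_integrable lborel J F" and g: "set_integrable lborel I g" and c: "0 \<le> c"
    and b: "\<And>s. s \<in> J \<Longrightarrow> \<bar>F s\<bar> \<le> c * (indicator I s * \<bar>g s\<bar>)"
  shows "\<bar>LBINT s:J. F s\<bar> \<le> c * (LBINT s:I. \<bar>g s\<bar>)"
proof -
  have "\<bar>LBINT s:J. F s\<bar> \<le> (LBINT s:J. \<bar>F s\<bar>)"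
    using set_integral_norm_bound[OF F] by simp
  also have "\<dots> = integral\<^sup>L lborel (\<lambda>s. indicator J s * \<bar>F s\<bar>)"
    by (simp add: set_lebesgue_integral_def)
  also have "\<dots> \<le> integral\<^sup>L lborel (\<lambda>s. c * (indicator I s * \<bar>g s\<bar>))"
  proof (rule integral_mono)
    show "integrable lborel (\<lambda>s. indicator J s * \<bar>F s\<bar>)"
      using set_integrable_abs[OF F] by (simp add: set_integrable_def)
    show "integrable lborel (\<lambda>s. c * (indicator I s * \<bar>g s\<bar>))"
      using set_integrable_abs[OF g] by (simp add: set_integrable_def)
    fix s show "indicator J s * \<bar>F s\<bar> \<le> c * (indicator I s * \<bar>g s\<bar>)"
      using b[of s] c by (cases "s \<in> J") (auto simp: indicator_def)
  qed
  also have "\<dots> = c * (LBINT s:I. \<bar>g s\<bar>)"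
    by (simp add: set_lebesgue_integral_def)
  finally show ?thesis .
qed

lemma Wkp_facts:
  assumes W: "in_Wkp_sinh k p N R vs" and k: "1 \<le> k"
  shows "\<forall>j<k. weak_deriv_on R (vs j) (vs (Suc j))"
    and "\<And>j (a::real) b. j \<le> k \<Longrightarrow> 0 < a \<Longrightarrow> b < R \<Longrightarrow> set_integrable lborel {a..b} (vs j)"
    and "\<And>j. j \<le> k \<Longrightarrow> set_integrable lborel {0<..<R} (\<lambda>t. \<bar>vs j t\<bar> powr p * sinh t powr (N - 1))"
proof -
  show ch: "\<forall>j<k. weak_deriv_on R (vs j) (vs (Suc j))" using W by (simp add: in_Wkp_sinh_def)
  show "\<And>j. j \<le> k \<Longrightarrow> set_integrable lborel {0<..<R} (\<lambda>t. \<bar>vs j t\<bar> powr p * sinh t powr (N - 1))"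
    using W by (simp add: in_Wkp_sinh_def)
  fix j and a b :: real assume j: "j \<le> k" and a: "0 < a" and b: "b < R"
  show "set_integrable lborel {a..b} (vs j)"
  proof (cases "j < k")
    case True
    then show ?thesis using ch a b unfolding weak_deriv_on_def by auto
  next
    case False
    then have "k - 1 < k" "j = Suc (k - 1)" using j k by auto
    then show ?thesis using ch a b unfolding weak_deriv_on_def by metis
  qed
qed

lemma cutf_bounds: "0 \<le> cutf \<sigma> t s" "cutf \<sigma> t s \<le> 1"
  by (auto simp: cutf_def)

lemma Gc_cont: "continuous_on A (Gc k t a c j)"
  by (rule smooth_seq_cont[OF Gc_smooth])

definition MGc :: "real \<Rightarrow> nat \<Rightarrow> real \<Rightarrow> real" where
  "MGc R k a = (\<Sum>i\<le>k. real (k choose i) * ((1 + R) ^ (k - 1) * (\<bar>a\<bar> ^ (k - i) * KH (k - i))))"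

lemma MGc_nonneg: "0 \<le> R \<Longrightarrow> 0 \<le> MGc R k a"
  unfolding MGc_def by (intro sum_nonneg mult_nonneg_nonneg) (auto simp: KH_nonneg)

lemma Gc_k_le_MGc:
  assumes "\<bar>s - t\<bar> \<le> R"
  shows "\<bar>Gc k t a c k s\<bar> \<le> MGc R k a"
proof -
  have "\<bar>Gc k t a c k s\<bar> \<le> (\<Sum>i\<le>k. real (k choose i) * ((1 + \<bar>s - t\<bar>) ^ (k - 1) * (\<bar>a\<bar> ^ (k - i) * KH (k - i))))"
    by (rule Gc_k_bound[OF KH])
  also have "\<dots> \<le> MGc R k a" unfolding MGc_def
    by (intro sum_mono mult_left_mono mult_right_mono power_mono)
       (use assms in \<open>auto simp: KH_nonneg\<close>)
  finally show ?thesis .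
qed

definition C1c :: "real \<Rightarrow> nat \<Rightarrow> real \<Rightarrow> real \<Rightarrow> real" where
  "C1c R k p N = MGc R k (-4/R) * CWf N p (R/2) (3*R/4)"

lemma small_t:
  fixes R p N t :: real and vs :: "nat \<Rightarrow> real \<Rightarrow> real"
  assumes R: "0 < R" and k: "1 \<le> k" and p: "1 < p" and N: "N = real k * p"
    and W: "in_Wkp_sinh k p N R vs" and cont: "isCont (vs 0) t" and t: "0 < t" "t < R/2"
  shows "\<bar>vs 0 t\<bar> \<le> ln (tanh (R/2) / tanh (t/2)) powr ((p-1)/p) * Lp_sinh_norm N p R (vs k) / fact (k-1)
            + C1c R k p N * Wkp_sinh_norm k p N R vs"
proof -
  note ch = Wkp_facts(1)[OF W k]
  note li = Wkp_facts(2)[OF W k]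
  note fw = Wkp_facts(3)[OF W k]
  define a where "a = -4/R"
  define c :: real where "c = 3"
  define G where "G = Gc k t a c"
  define \<beta> where "\<beta> = 7*R/8"
  define J where "J = {t/2..\<beta>}"
  have arg: "a * s + c = 3 - 4 * s / R" for s unfolding a_def c_def by (simp add: field_simps)
  have rep: "vs 0 t = 1 * ((-1) ^ k * (LBINT s:{t/2..\<beta>}. (vs k s * G 0 s) * cutf 1 t s)
                       - (LBINT s:{t/2..\<beta>}. (vs 0 s * G k s) * cutf 1 t s))"
  proof (rule delta_extract[OF ch k _ _ _ _ cont])
    show "0 < t/2" "t/2 < t" "t < \<beta>" "\<beta> < R" using t R by (auto simp: \<beta>_def)
    show "smooth_seq G" unfolding G_def by (rule Gc_smooth)
    show "(1::real) = 1 \<or> (1::real) = -1" by simp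
    show "G j s = 0" if "0 \<le> 1 * (s - t)" "s \<le> t/2 \<or> \<beta> \<le> s" for j s
    proof -
      have "\<beta> \<le> s" using that t by auto
      then have "a * s + c < 0" unfolding arg \<beta>_def using R by (simp add: field_simps)
      then show ?thesis unfolding G_def by (rule Gc_zero_neg)
    qed
    have at: "1 < a * t + c" unfolding arg using t R by (simp add: field_simps)
    show "G j t = 0" if "j < k - 1" for j
      unfolding G_def Gc_at_t[OF at] using that by (simp add: pw_at)
    show "G (k - 1) t = 1"
      unfolding G_def Gc_at_t[OF at] by (simp add: pw_at)
  qed
  define T1 where "T1 = (LBINT s:J. (vs k s * G 0 s) * cutf 1 t s)"
  define T2 where "T2 = (LBINT s:J. (vs 0 s * G k s) * cutf 1 t s)"
  have vt: "\<bar>vs 0 t\<bar> \<le> \<bar>T1\<bar> + \<bar>T2\<bar>"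
  proof -
    have "vs 0 t = (-1) ^ k * T1 - T2" using rep unfolding T1_def T2_def J_def by simp
    then have "\<bar>vs 0 t\<bar> \<le> \<bar>(-1) ^ k * T1\<bar> + \<bar>T2\<bar>" by linarith
    then show ?thesis by (simp add: abs_mult)
  qed
  have Gcont: "continuous_on UNIV (G j)" for j unfolding G_def by (rule Gc_cont)
  have cm: "cutf 1 t \<in> borel_measurable borel" by (rule cutf_measurable)
  have iJ: "set_integrable lborel J (\<lambda>s. (vs j s * G i s) * cutf 1 t s)" if "j \<le> k" for i j
  proof -
    have "set_integrable lborel {t/2..\<beta>} (\<lambda>s. vs j s * G i s)"
      by (rule set_integrable_mult_cont[OF li[OF that] Gcont]) (use t R in \<open>auto simp: \<beta>_def\<close>)
    then show ?thesis unfolding J_def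
      by (rule set_integrable_mult_bounded[OF _ cm]) (auto simp: cutf_def)
  qed
  have iT: "set_integrable lborel {t..\<beta>} (\<lambda>s. vs k s * s ^ (k - 1))"
    by (rule set_integrable_mult_cont[OF li]) (use t R in \<open>auto simp: \<beta>_def intro!: continuous_intros\<close>)
  have T1b: "\<bar>T1\<bar> \<le> (1 / fact (k - 1)) * (LBINT s:{t..\<beta>}. \<bar>vs k s * s ^ (k - 1)\<bar>)"
    unfolding T1_def
  proof (rule int_bound_helper[OF iJ[OF order_refl] iT])
    show "0 \<le> 1 / (fact (k - 1) :: real)" by simp
    fix s assume s: "s \<in> J"
    show "\<bar>vs k s * G 0 s * cutf 1 t s\<bar> \<le> 1 / fact (k - 1) * (indicator {t..\<beta>} s * \<bar>vs k s * s ^ (k - 1)\<bar>)"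
    proof (cases "t < s")
      case False then show ?thesis by (simp add: cutf_def)
    next
      case True
      have s0: "0 < s" using True t by simp
      have "\<bar>G 0 s\<bar> = \<bar>pw (k - 1) t 0 s\<bar> * \<bar>Hs 0 (a * s + c)\<bar>"
        unfolding G_def Gc_0 by (simp add: abs_mult)
      also have "\<dots> \<le> \<bar>pw (k - 1) t 0 s\<bar> * 1"
        using Hs0_bounds[of "a * s + c"] by (intro mult_left_mono) auto
      also have "\<bar>pw (k - 1) t 0 s\<bar> = (s - t) ^ (k - 1) / fact (k - 1)"
        using True by (simp add: pw_def)
      also have "\<dots> \<le> s ^ (k - 1) / fact (k - 1)"
        by (intro divide_right_mono power_mono) (use True t in auto)
      finally have g0: "\<bar>G 0 s\<bar> \<le> s ^ (k - 1) / fact (k - 1)" by simp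
      have "\<bar>vs k s * G 0 s * cutf 1 t s\<bar> = \<bar>vs k s\<bar> * \<bar>G 0 s\<bar>"
        using True by (simp add: cutf_def abs_mult)
      also have "\<dots> \<le> \<bar>vs k s\<bar> * (s ^ (k - 1) / fact (k - 1))"
        by (rule mult_left_mono[OF g0]) simp
      also have "\<dots> = 1 / fact (k - 1) * (indicator {t..\<beta>} s * \<bar>vs k s * s ^ (k - 1)\<bar>)"
        using True s s0 by (simp add: J_def indicator_def abs_mult)
      finally show ?thesis .
    qed
  qed
  have fb: "(LBINT s:{t..\<beta>}. \<bar>vs k s * s ^ (k - 1)\<bar>) \<le> wint N p R (vs k) powr (1/p) * ln (tanh (R/2) / tanh (t/2)) powr ((p-1)/p)"
    by (rule first_bound[OF p k N _ _ _ li fw]) (use t R in \<open>auto simp: \<beta>_def\<close>)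
  have i2: "set_integrable lborel {R/2..3*R/4} (vs 0)" by (rule li) (use R in auto)
  have T2b: "\<bar>T2\<bar> \<le> MGc R k a * (LBINT s:{R/2..3*R/4}. \<bar>vs 0 s\<bar>)"
    unfolding T2_def
  proof (rule int_bound_helper[OF iJ i2 MGc_nonneg])
    show "0 \<le> R" using R by simp
    show "0 \<le> k" by simp
    fix s assume s: "s \<in> J"
    show "\<bar>vs 0 s * G k s * cutf 1 t s\<bar> \<le> MGc R k a * (indicator {R/2..3*R/4} s * \<bar>vs 0 s\<bar>)"
    proof (cases "s \<in> {R/2..3*R/4}")
      case False
      then have "a * s + c < 0 \<or> 1 < a * s + c" unfolding arg using R by (auto simp: field_simps)
      then have "G k s = 0" unfolding G_def by (rule Gc_k_zero[OF k])
      then show ?thesis using False by simp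
    next
      case True
      have "\<bar>s - t\<bar> \<le> R" using True s t R by (auto simp: J_def \<beta>_def)
      then have gk: "\<bar>G k s\<bar> \<le> MGc R k a" unfolding G_def by (rule Gc_k_le_MGc)
      have "\<bar>vs 0 s * G k s * cutf 1 t s\<bar> \<le> \<bar>vs 0 s\<bar> * \<bar>G k s\<bar>"
        using cutf_bounds[of 1 t s] by (simp add: abs_mult mult_left_le)
      also have "\<dots> \<le> \<bar>vs 0 s\<bar> * MGc R k a" by (rule mult_left_mono[OF gk]) simp
      finally show ?thesis using True by (simp add: mult.commute)
    qed
  qed
  have l1: "(LBINT s:{R/2..3*R/4}. \<bar>vs 0 s\<bar>) \<le> wint N p R (vs 0) powr (1/p) * CWf N p (R/2) (3*R/4)"
    by (rule L1_bound[OF p _ _ _ i2 fw]) (use R in auto)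
  have W0: "wint N p R (vs 0) powr (1/p) \<le> Wkp_sinh_norm k p N R vs"
    by (rule wint_le_Wkp) (use p in auto)
  have MG0: "0 \<le> MGc R k a" by (rule MGc_nonneg) (use R in auto)
  have CW0: "0 \<le> CWf N p (R/2) (3*R/4)" by (rule CWf_nonneg)
  have "\<bar>T2\<bar> \<le> MGc R k a * (wint N p R (vs 0) powr (1/p) * CWf N p (R/2) (3*R/4))"
    using T2b l1 MG0 by (meson mult_left_mono order_trans)
  also have "\<dots> \<le> MGc R k a * (Wkp_sinh_norm k p N R vs * CWf N p (R/2) (3*R/4))"
    by (intro mult_left_mono mult_right_mono W0 MG0 CW0)
  also have "\<dots> = C1c R k p N * Wkp_sinh_norm k p N R vs" unfolding C1c_def a_def by simp
  finally have T2f: "\<bar>T2\<bar> \<le> C1c R k p N * Wkp_sinh_norm k p N R vs" .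
  have "\<bar>T1\<bar> \<le> (1 / fact (k - 1)) * (wint N p R (vs k) powr (1/p) * ln (tanh (R/2) / tanh (t/2)) powr ((p-1)/p))"
    using T1b fb by (meson mult_left_mono order_trans divide_nonneg_nonneg fact_ge_zero zero_le_one)
  also have "\<dots> = ln (tanh (R/2) / tanh (t/2)) powr ((p-1)/p) * Lp_sinh_norm N p R (vs k) / fact (k-1)"
    by (simp add: Lp_sinh_norm_def)
  finally show ?thesis using vt T2f by linarith
qed

definition C2c :: "real \<Rightarrow> nat \<Rightarrow> real \<Rightarrow> real \<Rightarrow> real" where
  "C2c R k p N = (1 + R) ^ (k - 1) * CWf N p (R/16) R + MGc R k (8/R) * CWf N p (R/8) (R/4)"

lemma large_t:
  fixes R p N t :: real and vs :: "nat \<Rightarrow> real \<Rightarrow> real"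
  assumes R: "0 < R" and k: "1 \<le> k" and p: "1 < p" and N: "N = real k * p"
    and W: "in_Wkp_sinh k p N R vs" and cont: "isCont (vs 0) t" and t: "R/2 \<le> t" "t < R"
  shows "\<bar>vs 0 t\<bar> \<le> C2c R k p N * Wkp_sinh_norm k p N R vs"
proof -
  note ch = Wkp_facts(1)[OF W k]
  note li = Wkp_facts(2)[OF W k]
  note fw = Wkp_facts(3)[OF W k]
  define a where "a = 8/R"
  define c :: real where "c = -1"
  define G where "G = Gc k t a c"
  define \<alpha> where "\<alpha> = R/16"
  define \<beta> where "\<beta> = (t + R)/2"
  define J where "J = {\<alpha>..\<beta>}"
  have arg: "a * s + c = 8 * s / R - 1" for s unfolding a_def c_def by (simp add: field_simps)
  have rep: "vs 0 t = (-1) * ((-1) ^ k * (LBINT s:{\<alpha>..\<beta>}. (vs k s * G 0 s) * cutf (-1) t s)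
                       - (LBINT s:{\<alpha>..\<beta>}. (vs 0 s * G k s) * cutf (-1) t s))"
  proof (rule delta_extract[OF ch k _ _ _ _ cont])
    show "0 < \<alpha>" "\<alpha> < t" "t < \<beta>" "\<beta> < R" using t R by (auto simp: \<alpha>_def \<beta>_def)
    show "smooth_seq G" unfolding G_def by (rule Gc_smooth)
    show "(-1::real) = 1 \<or> (-1::real) = -1" by simp
    show "G j s = 0" if "0 \<le> -1 * (s - t)" "s \<le> \<alpha> \<or> \<beta> \<le> s" for j s
    proof -
      have "s \<le> \<alpha>" using that t by (auto simp: \<beta>_def)
      then have "a * s + c < 0" unfolding arg \<alpha>_def using R by (simp add: field_simps)
      then show ?thesis unfolding G_def by (rule Gc_zero_neg)
    qed
    have at: "1 < a * t + c" unfolding arg using t R by (simp add: field_simps)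
    show "G j t = 0" if "j < k - 1" for j
      unfolding G_def Gc_at_t[OF at] using that by (simp add: pw_at)
    show "G (k - 1) t = 1"
      unfolding G_def Gc_at_t[OF at] by (simp add: pw_at)
  qed
  define T1 where "T1 = (LBINT s:J. (vs k s * G 0 s) * cutf (-1) t s)"
  define T2 where "T2 = (LBINT s:J. (vs 0 s * G k s) * cutf (-1) t s)"
  have vt: "\<bar>vs 0 t\<bar> \<le> \<bar>T1\<bar> + \<bar>T2\<bar>"
  proof -
    have "vs 0 t = T2 - (-1) ^ k * T1" using rep unfolding T1_def T2_def J_def by simp
    then have "\<bar>vs 0 t\<bar> \<le> \<bar>(-1) ^ k * T1\<bar> + \<bar>T2\<bar>" by linarith
    then show ?thesis by (simp add: abs_mult)
  qed
  have Gcont: "continuous_on UNIV (G j)" for j unfolding G_def by (rule Gc_cont)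
  have cm: "cutf (-1) t \<in> borel_measurable borel" by (rule cutf_measurable)
  have iJ: "set_integrable lborel J (\<lambda>s. (vs j s * G i s) * cutf (-1) t s)" if "j \<le> k" for i j
  proof -
    have "set_integrable lborel {\<alpha>..\<beta>} (\<lambda>s. vs j s * G i s)"
      by (rule set_integrable_mult_cont[OF li[OF that] Gcont]) (use t R in \<open>auto simp: \<alpha>_def \<beta>_def\<close>)
    then show ?thesis unfolding J_def
      by (rule set_integrable_mult_bounded[OF _ cm]) (auto simp: cutf_def)
  qed
  have P0: "0 \<le> (1 + R) ^ (k - 1)" using R by simp
  have i1: "set_integrable lborel {\<alpha>..t} (vs k)" by (rule li) (use t R in \<open>auto simp: \<alpha>_def\<close>)
  have T1b: "\<bar>T1\<bar> \<le> (1 + R) ^ (k - 1) * (LBINT s:{\<alpha>..t}. \<bar>vs k s\<bar>)"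
    unfolding T1_def
  proof (rule int_bound_helper[OF iJ[OF order_refl] i1 P0])
    fix s assume s: "s \<in> J"
    show "\<bar>vs k s * G 0 s * cutf (-1) t s\<bar> \<le> (1 + R) ^ (k - 1) * (indicator {\<alpha>..t} s * \<bar>vs k s\<bar>)"
    proof (cases "s < t")
      case False then show ?thesis using P0 by (simp add: cutf_def)
    next
      case True
      have "\<bar>G 0 s\<bar> = \<bar>pw (k - 1) t 0 s\<bar> * \<bar>Hs 0 (a * s + c)\<bar>"
        unfolding G_def Gc_0 by (simp add: abs_mult)
      also have "\<dots> \<le> \<bar>pw (k - 1) t 0 s\<bar> * 1"
        using Hs0_bounds[of "a * s + c"] by (intro mult_left_mono) auto
      also have "\<dots> \<le> (1 + \<bar>s - t\<bar>) ^ (k - 1)" using pw_bound by simp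
      also have "\<dots> \<le> (1 + R) ^ (k - 1)"
        by (intro power_mono) (use True s t R in \<open>auto simp: J_def \<alpha>_def\<close>)
      finally have g0: "\<bar>G 0 s\<bar> \<le> (1 + R) ^ (k - 1)" .
      have "\<bar>vs k s * G 0 s * cutf (-1) t s\<bar> = \<bar>vs k s\<bar> * \<bar>G 0 s\<bar>"
        using True by (simp add: cutf_def abs_mult)
      also have "\<dots> \<le> \<bar>vs k s\<bar> * (1 + R) ^ (k - 1)"
        by (rule mult_left_mono[OF g0]) simp
      also have "\<dots> = (1 + R) ^ (k - 1) * (indicator {\<alpha>..t} s * \<bar>vs k s\<bar>)"
        using True s by (simp add: J_def indicator_def)
      finally show ?thesis .
    qed
  qed
  have l1: "(LBINT s:{\<alpha>..t}. \<bar>vs k s\<bar>) \<le> wint N p R (vs k) powr (1/p) * CWf N p \<alpha> t"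
    by (rule L1_bound[OF p _ _ _ i1 fw]) (use R t in \<open>auto simp: \<alpha>_def\<close>)
  have cwm: "CWf N p \<alpha> t \<le> CWf N p (R/16) R"
    unfolding \<alpha>_def by (rule CWf_mono[OF p]) (use R t in auto)
  have Wk: "wint N p R (vs k) powr (1/p) \<le> Wkp_sinh_norm k p N R vs"
    by (rule wint_le_Wkp) (use p in auto)
  have W0: "wint N p R (vs 0) powr (1/p) \<le> Wkp_sinh_norm k p N R vs"
    by (rule wint_le_Wkp) (use p in auto)
  have T1f: "\<bar>T1\<bar> \<le> (1 + R) ^ (k - 1) * CWf N p (R/16) R * Wkp_sinh_norm k p N R vs"
  proof -
    have "wint N p R (vs k) powr (1/p) * CWf N p \<alpha> t \<le> Wkp_sinh_norm k p N R vs * CWf N p (R/16) R"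
      by (intro mult_mono Wk cwm CWf_nonneg) (use Wk in \<open>auto intro: order_trans[OF powr_ge_zero]\<close>)
    then have "(1 + R) ^ (k - 1) * (LBINT s:{\<alpha>..t}. \<bar>vs k s\<bar>) \<le> (1 + R) ^ (k - 1) * (Wkp_sinh_norm k p N R vs * CWf N p (R/16) R)"
      using l1 P0 by (intro mult_left_mono) auto
    then show ?thesis using T1b by (simp add: mult_ac)
  qed
  have i2: "set_integrable lborel {R/8..R/4} (vs 0)" by (rule li) (use R in auto)
  have T2b: "\<bar>T2\<bar> \<le> MGc R k a * (LBINT s:{R/8..R/4}. \<bar>vs 0 s\<bar>)"
    unfolding T2_def
  proof (rule int_bound_helper[OF iJ i2 MGc_nonneg])
    show "0 \<le> R" using R by simp
    show "0 \<le> k" by simp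
    fix s assume s: "s \<in> J"
    show "\<bar>vs 0 s * G k s * cutf (-1) t s\<bar> \<le> MGc R k a * (indicator {R/8..R/4} s * \<bar>vs 0 s\<bar>)"
    proof (cases "s \<in> {R/8..R/4}")
      case False
      then have "a * s + c < 0 \<or> 1 < a * s + c" unfolding arg using R by (auto simp: field_simps)
      then have "G k s = 0" unfolding G_def by (rule Gc_k_zero[OF k])
      then show ?thesis using False by simp
    next
      case True
      have "\<bar>s - t\<bar> \<le> R" using True s t R by (auto simp: J_def \<alpha>_def)
      then have gk: "\<bar>G k s\<bar> \<le> MGc R k a" unfolding G_def by (rule Gc_k_le_MGc)
      have "\<bar>vs 0 s * G k s * cutf (-1) t s\<bar> \<le> \<bar>vs 0 s\<bar> * \<bar>G k s\<bar>"
        using cutf_bounds[of "-1" t s] by (simp add: abs_mult mult_left_le)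
      also have "\<dots> \<le> \<bar>vs 0 s\<bar> * MGc R k a" by (rule mult_left_mono[OF gk]) simp
      finally show ?thesis using True by (simp add: mult.commute)
    qed
  qed
  have l2: "(LBINT s:{R/8..R/4}. \<bar>vs 0 s\<bar>) \<le> wint N p R (vs 0) powr (1/p) * CWf N p (R/8) (R/4)"
    by (rule L1_bound[OF p _ _ _ i2 fw]) (use R in auto)
  have MG0: "0 \<le> MGc R k a" by (rule MGc_nonneg) (use R in auto)
  have "\<bar>T2\<bar> \<le> MGc R k a * (wint N p R (vs 0) powr (1/p) * CWf N p (R/8) (R/4))"
    using T2b l2 MG0 by (meson mult_left_mono order_trans)
  also have "\<dots> \<le> MGc R k a * (Wkp_sinh_norm k p N R vs * CWf N p (R/8) (R/4))"
    by (intro mult_left_mono mult_right_mono W0 MG0 CWf_nonneg)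
  finally have T2f: "\<bar>T2\<bar> \<le> MGc R k (8/R) * CWf N p (R/8) (R/4) * Wkp_sinh_norm k p N R vs"
    unfolding a_def by (simp add: mult_ac)
  show ?thesis using vt T1f T2f unfolding C2c_def by (simp add: algebra_simps)
qed

lemma isCont_of_cont_on:
  fixes f :: "real \<Rightarrow> real"
  assumes "continuous_on {0<..R} f" "0 < t" "t < R"
  shows "isCont f t"
proof -
  have "continuous_on {0<..<R} f" by (rule continuous_on_subset[OF assms(1)]) auto
  then show ?thesis using assms(2,3) by (simp add: continuous_on_eq_continuous_at)
qed

lemma zero_case:
  fixes R p N t :: real and vs :: "nat \<Rightarrow> real \<Rightarrow> real"
  assumes R: "0 < R" and p: "1 < p" and N: "N = real 1 * p"
    and W: "in_Wkp_sinh 1 p N R vs" and cont: "continuous_on {0<..R} (vs 0)" and vR: "vs 0 R = 0"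
    and t: "0 < t" "t < R"
  shows "\<bar>vs 0 t\<bar> \<le> ln (tanh (R/2) / tanh (t/2)) powr ((p-1)/p) * Lp_sinh_norm N p R (vs 1) / fact (1 - 1)"
proof -
  have k: "1 \<le> (1::nat)" by simp
  note ch = Wkp_facts(1)[OF W k]
  note li = Wkp_facts(2)[OF W k]
  note fw = Wkp_facts(3)[OF W k]
  define L where "L = ln (tanh (R/2) / tanh (t/2)) powr ((p-1)/p) * wint N p R (vs 1) powr (1/p)"
  have goal: "\<bar>vs 0 t\<bar> \<le> L + e" if e: "0 < e" for e
  proof -
    define \<eta> where "\<eta> = e / (KH 1 + 1)"
    have eta: "0 < \<eta>" "\<eta> * KH 1 \<le> e"
      using e KH_nonneg[of 1] by (auto simp: \<eta>_def field_simps)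
    obtain \<rho> where rho: "0 < \<rho>" "\<And>s. s \<in> {0<..R} \<Longrightarrow> dist s R < \<rho> \<Longrightarrow> dist (vs 0 s) (vs 0 R) < \<eta>"
      using cont eta(1) R unfolding continuous_on_iff by (metis greaterThanAtMost_iff order_refl)
    define \<rho>' where "\<rho>' = min \<rho> (R - t)"
    have rho': "0 < \<rho>'" "\<rho>' \<le> \<rho>" "\<rho>' \<le> R - t" using rho t by (auto simp: \<rho>'_def)
    define b where "b = R - \<rho>'/2"
    define \<delta> where "\<delta> = \<rho>'/4"
    have bd: "t < b - \<delta>" "b < R" "0 < \<delta>" using rho' by (auto simp: b_def \<delta>_def)
    have small: "\<bar>vs 0 s\<bar> < \<eta>" if "s \<in> {b - \<delta>..b}" for s
    proof -
      have "s \<in> {0<..R}" "dist s R < \<rho>" using that rho' t bd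
        by (auto simp: b_def \<delta>_def dist_real_def)
      then show ?thesis using rho(2)[of s] vR by (simp add: dist_real_def)
    qed
    define a where "a = -1/\<delta>"
    define c where "c = b/\<delta>"
    have arg: "a * s + c = (b - s) / \<delta>" for s unfolding a_def c_def by (simp add: diff_divide_distrib)
    define G where "G = Gc 1 t a c"
    define \<beta> where "\<beta> = (b + R)/2"
    define J where "J = {t/2..\<beta>}"
    have ct: "isCont (vs 0) t" by (rule isCont_of_cont_on[OF cont t])
    have rep: "vs 0 t = 1 * ((-1) ^ 1 * (LBINT s:{t/2..\<beta>}. (vs 1 s * G 0 s) * cutf 1 t s)
                         - (LBINT s:{t/2..\<beta>}. (vs 0 s * G 1 s) * cutf 1 t s))"
    proof (rule delta_extract[OF ch k _ _ _ _ ct])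
      show "0 < t/2" "t/2 < t" "t < \<beta>" "\<beta> < R" using t bd by (auto simp: \<beta>_def)
      show "smooth_seq G" unfolding G_def by (rule Gc_smooth)
      show "(1::real) = 1 \<or> (1::real) = -1" by simp
      show "G j s = 0" if "0 \<le> 1 * (s - t)" "s \<le> t/2 \<or> \<beta> \<le> s" for j s
      proof -
        have "\<beta> \<le> s" using that t by auto
        then have "a * s + c < 0" unfolding arg \<beta>_def using bd by (simp add: field_simps)
        then show ?thesis unfolding G_def by (rule Gc_zero_neg)
      qed
      have at: "1 < a * t + c" unfolding arg using bd by (simp add: field_simps)
      show "G j t = 0" if "j < 1 - 1" for j using that by simp
      show "G (1 - 1) t = 1"
        unfolding G_def Gc_at_t[OF at] by (simp add: pw_at)
    qed
    define T1 where "T1 = (LBINT s:J. (vs 1 s * G 0 s) * cutf 1 t s)"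
    define T2 where "T2 = (LBINT s:J. (vs 0 s * G 1 s) * cutf 1 t s)"
    have vt: "\<bar>vs 0 t\<bar> \<le> \<bar>T1\<bar> + \<bar>T2\<bar>"
    proof -
      have "vs 0 t = - T1 - T2" using rep unfolding T1_def T2_def J_def by simp
      then show ?thesis by linarith
    qed
    have Gcont: "continuous_on UNIV (G j)" for j unfolding G_def by (rule Gc_cont)
    have cm: "cutf 1 t \<in> borel_measurable borel" by (rule cutf_measurable)
    have iJ: "set_integrable lborel J (\<lambda>s. (vs j s * G i s) * cutf 1 t s)" if "j \<le> 1" for i j
    proof -
      have "set_integrable lborel {t/2..\<beta>} (\<lambda>s. vs j s * G i s)"
        by (rule set_integrable_mult_cont[OF li[OF that] Gcont]) (use t bd in \<open>auto simp: \<beta>_def\<close>)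
      then show ?thesis unfolding J_def
        by (rule set_integrable_mult_bounded[OF _ cm]) (auto simp: cutf_def)
    qed
    have iT: "set_integrable lborel {t..\<beta>} (\<lambda>s. vs 1 s * s ^ (1 - 1))"
      using li[of 1 t \<beta>] t bd by (simp add: \<beta>_def)
    have T1b: "\<bar>T1\<bar> \<le> 1 * (LBINT s:{t..\<beta>}. \<bar>vs 1 s * s ^ (1 - 1)\<bar>)"
      unfolding T1_def
    proof (rule int_bound_helper[OF iJ[OF order_refl] iT])
      fix s assume s: "s \<in> J"
      show "\<bar>vs 1 s * G 0 s * cutf 1 t s\<bar> \<le> 1 * (indicator {t..\<beta>} s * \<bar>vs 1 s * s ^ (1 - 1)\<bar>)"
      proof (cases "t < s")
        case False then show ?thesis by (simp add: cutf_def)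
      next
        case True
        have g0: "\<bar>G 0 s\<bar> \<le> 1"
          unfolding G_def Gc_0 using Hs0_bounds[of "a * s + c"] by (simp add: pw_def)
        have "\<bar>vs 1 s * G 0 s * cutf 1 t s\<bar> = \<bar>vs 1 s\<bar> * \<bar>G 0 s\<bar>"
          using True by (simp add: cutf_def abs_mult)
        also have "\<dots> \<le> \<bar>vs 1 s\<bar> * 1" by (rule mult_left_mono[OF g0]) simp
        finally show ?thesis using True s by (simp add: J_def indicator_def)
      qed
    qed simp
    have fb: "(LBINT s:{t..\<beta>}. \<bar>vs 1 s * s ^ (1 - 1)\<bar>) \<le> wint N p R (vs 1) powr (1/p) * ln (tanh (R/2) / tanh (t/2)) powr ((p-1)/p)"
      by (rule first_bound[OF p k N _ _ _ li fw]) (use t bd in \<open>auto simp: \<beta>_def\<close>)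
    have G1: "G 1 s = a * Hs 1 (a * s + c)" for s
      unfolding G_def Gc_def by (simp add: pw_def)
    have c0: "0 \<le> \<eta> * (KH 1 / \<delta>)" using eta bd KH_nonneg[of 1] by simp
    have i1: "set_integrable lborel {b - \<delta>..b} (\<lambda>_. 1::real)" by (rule set_int_cont) simp
    have T2b: "\<bar>T2\<bar> \<le> \<eta> * (KH 1 / \<delta>) * (LBINT s:{b - \<delta>..b}. \<bar>1::real\<bar>)"
      unfolding T2_def
    proof (rule int_bound_helper[OF iJ i1 c0])
      show "0 \<le> (1::nat)" by simp
      fix s assume s: "s \<in> J"
      show "\<bar>vs 0 s * G 1 s * cutf 1 t s\<bar> \<le> \<eta> * (KH 1 / \<delta>) * (indicator {b - \<delta>..b} s * \<bar>1\<bar>)"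
      proof (cases "s \<in> {b - \<delta>..b}")
        case False
        then have "a * s + c < 0 \<or> 1 < a * s + c" unfolding arg using bd by (auto simp: field_simps)
        then have "G 1 s = 0" unfolding G_def by (rule Gc_k_zero[OF k])
        then show ?thesis using False by simp
      next
        case True
        have g1: "\<bar>G 1 s\<bar> \<le> KH 1 / \<delta>"
          unfolding G1 using KH[of 1 "a * s + c"] bd by (simp add: a_def abs_mult field_simps)
        have "\<bar>vs 0 s * G 1 s * cutf 1 t s\<bar> \<le> \<bar>vs 0 s\<bar> * \<bar>G 1 s\<bar>"
          using cutf_bounds[of 1 t s] by (simp add: abs_mult mult_left_le)
        also have "\<dots> \<le> \<eta> * (KH 1 / \<delta>)"
          by (rule mult_mono) (use small[OF True] g1 in auto)
        finally show ?thesis using True by simp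
      qed
    qed
    have "(LBINT s:{b - \<delta>..b}. \<bar>1::real\<bar>) = \<delta>"
      using bd by (simp add: set_integral_const measure_def)
    then have T2f: "\<bar>T2\<bar> \<le> \<eta> * KH 1" using T2b bd by simp
    have "\<bar>T1\<bar> \<le> L" using T1b fb unfolding L_def by (simp add: mult.commute)
    then show ?thesis using vt T2f eta by linarith
  qed
  have "\<bar>vs 0 t\<bar> \<le> L" by (rule field_le_epsilon) (rule goal)
  then show ?thesis unfolding L_def Lp_sinh_norm_def by simp
qed

lemma Wkp_nonneg: "0 \<le> Wkp_sinh_norm k p N R vs"
  by (simp add: Wkp_sinh_norm_def)

lemma at_R_bound:
  fixes f :: "real \<Rightarrow> real" and R M :: real
  assumes R: "0 < R" and cont: "continuous_on {0<..R} f"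
    and b: "\<And>t. R/2 \<le> t \<Longrightarrow> t < R \<Longrightarrow> \<bar>f t\<bar> \<le> M"
  shows "\<bar>f R\<bar> \<le> M"
proof -
  have "continuous_on {R/2..R} f" by (rule continuous_on_subset[OF cont]) (use R in auto)
  then have "(f \<longlongrightarrow> f R) (at R within {R/2..R})"
    using R by (simp add: continuous_on_def)
  then have lim: "(f \<longlongrightarrow> f R) (at_left R)" using R by (simp add: at_within_Icc_at_left)
  have ev: "eventually (\<lambda>x. \<bar>f x\<bar> \<le> M) (at_left R)"
  proof (rule eventually_mono[OF eventually_at_left_real[of "R/2" R]])
    show "R/2 < R" using R by simp
    fix x assume "x \<in> {R/2<..<R}"
    then show "\<bar>f x\<bar> \<le> M" using b by auto
  qed
  show ?thesis by (rule tendsto_upperbound[OF tendsto_rabs[OF lim] ev]) simp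
qed

theorem proposition5p7:
  fixes R p N :: real and k :: nat
  assumes "0 < R" and "1 \<le> k" and "1 < p" and "N = real k * p"
  shows "(\<exists>C>0. \<forall>vs t. in_Wkp_sinh k p N R vs \<longrightarrow> continuous_on {0<..R} (vs 0) \<longrightarrow>
            t \<in> {0<..R} \<longrightarrow>
            \<bar>vs 0 t\<bar> \<le> ln (tanh (R / 2) / tanh (t / 2)) powr ((p - 1) / p)
                  * Lp_sinh_norm N p R (vs k) / fact (k - 1)
                + C * Wkp_sinh_norm k p N R vs)
       \<and> (k = 1 \<longrightarrow> (\<forall>vs t. in_Wkp_sinh k p N R vs \<longrightarrow> continuous_on {0<..R} (vs 0) \<longrightarrow>
            vs 0 R = 0 \<longrightarrow> t \<in> {0<..R} \<longrightarrow>
            \<bar>vs 0 t\<bar> \<le> ln (tanh (R / 2) / tanh (t / 2)) powr ((p - 1) / p)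
                  * Lp_sinh_norm N p R (vs k) / fact (k - 1)))"
proof (intro conjI impI)
  note R = assms(1) and k = assms(2) and p = assms(3) and N = assms(4)
  define C where "C = \<bar>C1c R k p N\<bar> + \<bar>C2c R k p N\<bar> + 1"
  show "\<exists>C>0. \<forall>vs t. in_Wkp_sinh k p N R vs \<longrightarrow> continuous_on {0<..R} (vs 0) \<longrightarrow>
            t \<in> {0<..R} \<longrightarrow>
            \<bar>vs 0 t\<bar> \<le> ln (tanh (R / 2) / tanh (t / 2)) powr ((p - 1) / p)
                  * Lp_sinh_norm N p R (vs k) / fact (k - 1)
                + C * Wkp_sinh_norm k p N R vs"
  proof (rule exI[of _ C], intro conjI allI impI)
    show "0 < C" unfolding C_def by simp
    fix vs t
    assume W: "in_Wkp_sinh k p N R vs" and cont: "continuous_on {0<..R} (vs 0)" and t: "t \<in> {0<..R}"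
    define X where "X = ln (tanh (R / 2) / tanh (t / 2)) powr ((p - 1) / p) * Lp_sinh_norm N p R (vs k) / fact (k - 1)"
    have X0: "0 \<le> X" unfolding X_def Lp_sinh_norm_def by simp
    have Wn: "0 \<le> Wkp_sinh_norm k p N R vs" by (rule Wkp_nonneg)
    have C1: "C1c R k p N * Wkp_sinh_norm k p N R vs \<le> C * Wkp_sinh_norm k p N R vs"
      by (rule mult_right_mono[OF _ Wn]) (simp add: C_def)
    have C2: "C2c R k p N * Wkp_sinh_norm k p N R vs \<le> C * Wkp_sinh_norm k p N R vs"
      by (rule mult_right_mono[OF _ Wn]) (simp add: C_def)
    have large: "\<bar>vs 0 s\<bar> \<le> C2c R k p N * Wkp_sinh_norm k p N R vs" if "R/2 \<le> s" "s < R" for s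
    proof (rule large_t[OF R k p N W _ that])
      show "isCont (vs 0) s" by (rule isCont_of_cont_on[OF cont]) (use that R in auto)
    qed
    show "\<bar>vs 0 t\<bar> \<le> X + C * Wkp_sinh_norm k p N R vs"
    proof (cases "t < R/2")
      case True
      have "\<bar>vs 0 t\<bar> \<le> X + C1c R k p N * Wkp_sinh_norm k p N R vs"
        unfolding X_def
      proof (rule small_t[OF R k p N W _ _ True])
        show "0 < t" using t by simp
        show "isCont (vs 0) t" by (rule isCont_of_cont_on[OF cont]) (use t True R in auto)
      qed
      then show ?thesis using C1 by linarith
    next
      case False
      have "\<bar>vs 0 t\<bar> \<le> C2c R k p N * Wkp_sinh_norm k p N R vs"
      proof (cases "t = R")
        case True
        show ?thesis unfolding True by (rule at_R_bound[OF R cont large])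
      next
        case False
        then show ?thesis using \<open>\<not> t < R/2\<close> t by (intro large) auto
      qed
      then show ?thesis using C2 X0 by linarith
    qed
  qed
  assume k1: "k = 1"
  show "\<forall>vs t. in_Wkp_sinh k p N R vs \<longrightarrow> continuous_on {0<..R} (vs 0) \<longrightarrow>
            vs 0 R = 0 \<longrightarrow> t \<in> {0<..R} \<longrightarrow>
            \<bar>vs 0 t\<bar> \<le> ln (tanh (R / 2) / tanh (t / 2)) powr ((p - 1) / p)
                  * Lp_sinh_norm N p R (vs k) / fact (k - 1)"
  proof (intro allI impI)
    fix vs t
    assume W: "in_Wkp_sinh k p N R vs" and cont: "continuous_on {0<..R} (vs 0)"
      and vR: "vs 0 R = 0" and t: "t \<in> {0<..R}"
    show "\<bar>vs 0 t\<bar> \<le> ln (tanh (R / 2) / tanh (t / 2)) powr ((p - 1) / p)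
                  * Lp_sinh_norm N p R (vs k) / fact (k - 1)"
    proof (cases "t = R")
      case True
      have "tanh (R/2) \<noteq> 0" using R by simp
      then show ?thesis using True vR by simp
    next
      case False
      then have t': "0 < t" "t < R" using t by auto
      have N1: "N = real 1 * p" using N k1 by simp
      have W1: "in_Wkp_sinh 1 p N R vs" using W k1 by simp
      show ?thesis unfolding k1 by (rule zero_case[OF R p N1 W1 cont vR t'])
    qed
  qed
qed

end
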